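(* Let $\mathcal E$ and $\mathcal E'$ be systems of equations in the Internal $\pi$-calculus such that $\mathcal E'$ extends $\mathcal E$ with respect to $\sqsubseteq_{\mathrm{tr}}$, and suppose $\mathcal E'$ is guarded and its syntactic solution has no divergences. If $\tilde F$ is a post-fixed point for $\sqsubseteq_{\mathrm{tr}}$ of $\mathcal E$ and $\tilde G$ is a pre-fixed point for $\sqsubseteq_{\mathrm{tr}}$ of $\mathcal E$, then $\tilde F\sqsubseteq_{\mathrm{tr}}\tilde G$.
   Context: Internal $\pi$-calculus: polyadic, well-sorted $\pi$-calculus with processes $P ::= 0\mid a(\tilde b).P\mid \overline a(\tilde b).P\mid(\nu a)P\mid P|P\mid\ !a(\tilde b).P\mid F\langle\tilde a\rangle$, abstractions $F::=(\tilde a)P\mid K$ (constants $K\triangleq(\tilde x)P$ with $P$ name-closed); all outputs bound, tuple components pairwise distinct; standard ground labelled transition system. For a sequence $s$ of visible actions $\mu_1,\dots,\mu_n$, $P\overset{s}{\Longrightarrow}$ if $P\overset{\mu_1}{\Longrightarrow}\cdots\overset{\mu_n}{\Longrightarrow}P_n$. $P\sqsubseteq_{\mathrm{tr}}Q$ if $P\overset{s}{\Longrightarrow}$ implies $Q\overset{s}{\Longrightarrow}$ for all $s$; extended to abstractions via fresh names, and to tuples componentwise. A process diverges if it has an infinite sequence of transitions that from some point on are all $\tau$; an abstraction diverges if its application to fresh names does. Expressions are name-closed abstractions possibly containing applications $X\langle\tilde a\rangle$ of equation variables. A system $\{X_i=E_i\}_{i\in I}$ ($I$ countable) is guarded if every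 occurrence of a variable in each $E_i$ is underneath a prefix. $E[\tilde F]$ replaces each $X_i$ by $F_i$. Syntactic solution: constants $K_{\mathcal E,i}\triangleq E_i[\tilde K_{\mathcal E}]$. $\tilde F$ is a pre-fixed point for $\sqsubseteq_{\mathrm{tr}}$ if $E_i[\tilde F]\sqsubseteq_{\mathrm{tr}}F_i$ for all $i$, a post-fixed point if $F_i\sqsubseteq_{\mathrm{tr}}E_i[\tilde F]$ for all $i$. $\mathcal E'$ extends $\mathcal E$ with respect to $\sqsubseteq_{\mathrm{tr}}$ if there is a fixed set of indices $J$ such that (1) every pre-fixed point of $\mathcal E$ for $\sqsubseteq_{\mathrm{tr}}$ can be obtained from a pre-fixed point of $\mathcal E'$ for $\sqsubseteq_{\mathrm{tr}}$ by removing the components with indices in $J$, and (2) the same holds for post-fixed points. *)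

theory Defs
  imports Main
begin

text \<open>
Names are de Bruijn indices (nat).  A binder of a tuple of k names binds the
indices 0..k-1 in its body (the i-th bound name of the tuple is index i);
all other indices are shifted by k.  Since outputs are bound and the bound
tuple is represented by indices, tuple components are automatically pairwise
distinct; for the name tuples of applications distinctness is enforced by the
well-sortedness predicate \<open>wt\<close> below.

\<open>PIn a k P\<close>  = a(b_0..b_{k-1}).P,   \<open>POut a k P\<close> = bound output,
\<open>PRes P\<close> = (nu a)P (a is index 0 in P),  \<open>PRep a k P\<close> = !a(b).P,
\<open>PVar i xs\<close> = equation variable application X_i<xs>,
\<open>PSol E i xs\<close> = constant application K<xs>, where the constant K is the i-th
component of the family of (mutually recursive) constants defined by
K_j := E j  (with occurrences of X_j in the bodies read as K_j); every family
of constant definitions has this form.  An abstraction is a pair (sort list, body),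
the body living in the context of its parameters.
\<close>

datatype 's pr =
    PNil
  | PIn nat nat "'s pr"
  | POut nat nat "'s pr"
  | PRes "'s pr"
  | PPar "'s pr" "'s pr"
  | PRep nat nat "'s pr"
  | PVar nat "nat list"
  | PSol "nat \<Rightarrow> 's list \<times> 's pr" nat "nat list"

type_synonym 's abs = "'s list \<times> 's pr"

definition up :: "nat \<Rightarrow> (nat \<Rightarrow> nat) \<Rightarrow> nat \<Rightarrow> nat" where
  "up k f = (\<lambda>i. if i < k then i else f (i - k) + k)"

primrec ren :: "(nat \<Rightarrow> nat) \<Rightarrow> 's pr \<Rightarrow> 's pr" where
  "ren f PNil = PNil"
| "ren f (PIn a k P) = PIn (f a) k (ren (up k f) P)"
| "ren f (POut a k P) = POut (f a) k (ren (up k f) P)"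
| "ren f (PRes P) = PRes (ren (up 1 f) P)"
| "ren f (PPar P Q) = PPar (ren f P) (ren f Q)"
| "ren f (PRep a k P) = PRep (f a) k (ren (up k f) P)"
| "ren f (PVar i xs) = PVar i (map f xs)"
| "ren f (PSol E i xs) = PSol E i (map f xs)"

text \<open>Replacement of each X_j by the (name-closed) abstraction F j.\<close>
primrec substV :: "(nat \<Rightarrow> 's abs) \<Rightarrow> 's pr \<Rightarrow> 's pr" where
  "substV F PNil = PNil"
| "substV F (PIn a k P) = PIn a k (substV F P)"
| "substV F (POut a k P) = POut a k (substV F P)"
| "substV F (PRes P) = PRes (substV F P)"
| "substV F (PPar P Q) = PPar (substV F P) (substV F Q)"
| "substV F (PRep a k P) = PRep a k (substV F P)"
| "substV F (PVar j xs) = ren (\<lambda>n. xs ! n) (snd (F j))"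
| "substV F (PSol E i xs) = PSol E i xs"

primrec resn :: "nat \<Rightarrow> 's pr \<Rightarrow> 's pr" where
  "resn 0 P = P"
| "resn (Suc k) P = PRes (resn k P)"

definition unfold_sol :: "(nat \<Rightarrow> 's abs) \<Rightarrow> nat \<Rightarrow> nat list \<Rightarrow> 's pr" where
  "unfold_sol E i xs =
     ren (\<lambda>n. xs ! n)
       (substV (\<lambda>j. (fst (E j), PSol E j [0..<length (fst (E j))])) (snd (E i)))"

text \<open>A sorting \<open>ob\<close> assigns to each sort the list of sorts of the tuples
carried by names of that sort.  \<open>vs\<close> gives the sorts of the parameters of the
equation variables; \<open>\<Gamma>\<close> the sorts of the free names (and closedness: every
free index is below \<open>length \<Gamma>\<close>).\<close>

inductive wt :: "('s \<Rightarrow> 's list) \<Rightarrow> (nat \<Rightarrow> 's list option) \<Rightarrow> 's list \<Rightarrow> 's pr \<Rightarrow> bool"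
  for ob where
  wt_nil: "wt ob vs \<Gamma> PNil"
| wt_in: "\<lbrakk>a < length \<Gamma>; length (ob (\<Gamma> ! a)) = k; wt ob vs (ob (\<Gamma> ! a) @ \<Gamma>) P\<rbrakk>
          \<Longrightarrow> wt ob vs \<Gamma> (PIn a k P)"
| wt_out: "\<lbrakk>a < length \<Gamma>; length (ob (\<Gamma> ! a)) = k; wt ob vs (ob (\<Gamma> ! a) @ \<Gamma>) P\<rbrakk>
          \<Longrightarrow> wt ob vs \<Gamma> (POut a k P)"
| wt_rep: "\<lbrakk>a < length \<Gamma>; length (ob (\<Gamma> ! a)) = k; wt ob vs (ob (\<Gamma> ! a) @ \<Gamma>) P\<rbrakk>
          \<Longrightarrow> wt ob vs \<Gamma> (PRep a k P)"
| wt_res: "wt ob vs (s # \<Gamma>) P \<Longrightarrow> wt ob vs \<Gamma> (PRes P)"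
| wt_par: "\<lbrakk>wt ob vs \<Gamma> P; wt ob vs \<Gamma> Q\<rbrakk> \<Longrightarrow> wt ob vs \<Gamma> (PPar P Q)"
| wt_var: "\<lbrakk>\<forall>x\<in>set xs. x < length \<Gamma>; distinct xs; vs i = Some (map (\<lambda>x. \<Gamma> ! x) xs)\<rbrakk>
          \<Longrightarrow> wt ob vs \<Gamma> (PVar i xs)"
| wt_sol: "\<lbrakk>\<forall>j. wt ob (\<lambda>j. Some (fst (E j))) (fst (E j)) (snd (E j));
           \<forall>x\<in>set xs. x < length \<Gamma>; distinct xs; map (\<lambda>x. \<Gamma> ! x) xs = fst (E i)\<rbrakk>
          \<Longrightarrow> wt ob vs \<Gamma> (PSol E i xs)"

text \<open>Labels: \<open>InA a k\<close> = input a(b_0..b_{k-1}) with fresh b, \<open>OutA a k\<close> =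
bound output; the received / emitted fresh names become indices 0..k-1 of the
derivative.\<close>

datatype act = Tau | InA nat nat | OutA nat nat

fun ar :: "act \<Rightarrow> nat" where
  "ar Tau = 0" | "ar (InA a k) = k" | "ar (OutA a k) = k"

definition swp :: "nat \<Rightarrow> nat \<Rightarrow> nat" where
  "swp k i = (if i < k then Suc i else if i = k then 0 else i)"

inductive step :: "'s pr \<Rightarrow> act \<Rightarrow> 's pr \<Rightarrow> bool" where
  s_in: "step (PIn a k P) (InA a k) P"
| s_out: "step (POut a k P) (OutA a k) P"
| s_rep: "step (PRep a k P) (InA a k) (PPar P (ren (\<lambda>i. i + k) (PRep a k P)))"
| s_parl: "step P \<mu> P' \<Longrightarrow> step (PPar P Q) \<mu> (PPar P' (ren (\<lambda>i. i + ar \<mu>) Q))"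
| s_parr: "step Q \<mu> Q' \<Longrightarrow> step (PPar P Q) \<mu> (PPar (ren (\<lambda>i. i + ar \<mu>) P) Q')"
| s_comm1: "\<lbrakk>step P (InA a k) P'; step Q (OutA a k) Q'\<rbrakk>
            \<Longrightarrow> step (PPar P Q) Tau (resn k (PPar P' Q'))"
| s_comm2: "\<lbrakk>step P (OutA a k) P'; step Q (InA a k) Q'\<rbrakk>
            \<Longrightarrow> step (PPar P Q) Tau (resn k (PPar P' Q'))"
| s_res_tau: "step P Tau P' \<Longrightarrow> step (PRes P) Tau (PRes P')"
| s_res_in: "step P (InA (Suc a) k) P' \<Longrightarrow> step (PRes P) (InA a k) (PRes (ren (swp k) P'))"
| s_res_out: "step P (OutA (Suc a) k) P' \<Longrightarrow> step (PRes P) (OutA a k) (PRes (ren (swp k) P'))"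
| s_sol: "step (unfold_sol E i xs) \<mu> P' \<Longrightarrow> step (PSol E i xs) \<mu> P'"

inductive wtr :: "'s pr \<Rightarrow> act list \<Rightarrow> bool" where
  wtr_nil: "wtr P []"
| wtr_tau: "\<lbrakk>step P Tau Q; wtr Q s\<rbrakk> \<Longrightarrow> wtr P s"
| wtr_vis: "\<lbrakk>step P \<mu> Q; \<mu> \<noteq> Tau; wtr Q s\<rbrakk> \<Longrightarrow> wtr P (\<mu> # s)"

definition tr_le :: "'s pr \<Rightarrow> 's pr \<Rightarrow> bool" where
  "tr_le P Q = (\<forall>s. wtr P s \<longrightarrow> wtr Q s)"

text \<open>For abstractions: application to fresh names = the body with its
parameters as (fresh) free names.\<close>
definition abs_le :: "'s abs \<Rightarrow> 's abs \<Rightarrow> bool" where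
  "abs_le F G = (fst F = fst G \<and> tr_le (snd F) (snd G))"

definition diverges :: "'s pr \<Rightarrow> bool" where
  "diverges P = (\<exists>f l. f 0 = P \<and> (\<forall>n. step (f n) (l n) (f (Suc n)))
                     \<and> (\<exists>N. \<forall>n\<ge>N. l n = Tau))"

text \<open>A system is an index set \<open>I\<close> (countable, as a set of naturals) and
\<open>E :: nat \<Rightarrow> 's abs\<close>, the equation X_i = E i for i in I.\<close>

definition vsys :: "nat set \<Rightarrow> (nat \<Rightarrow> 's abs) \<Rightarrow> nat \<Rightarrow> 's list option" where
  "vsys I E j = (if j \<in> I then Some (fst (E j)) else None)"

definition sys_ok :: "('s \<Rightarrow> 's list) \<Rightarrow> nat set \<Rightarrow> (nat \<Rightarrow> 's abs) \<Rightarrow> bool" where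
  "sys_ok ob I E = (\<forall>i\<in>I. wt ob (vsys I E) (fst (E i)) (snd (E i)))"

primrec guarded :: "'s pr \<Rightarrow> bool" where
  "guarded PNil = True"
| "guarded (PIn a k P) = True"
| "guarded (POut a k P) = True"
| "guarded (PRep a k P) = True"
| "guarded (PRes P) = guarded P"
| "guarded (PPar P Q) = (guarded P \<and> guarded Q)"
| "guarded (PVar i xs) = False"
| "guarded (PSol E i xs) = True"

definition guarded_sys :: "nat set \<Rightarrow> (nat \<Rightarrow> 's abs) \<Rightarrow> bool" where
  "guarded_sys I E = (\<forall>i\<in>I. guarded (snd (E i)))"

definition inst :: "(nat \<Rightarrow> 's abs) \<Rightarrow> (nat \<Rightarrow> 's abs) \<Rightarrow> nat \<Rightarrow> 's abs" where
  "inst E F i = (fst (E i), substV F (snd (E i)))"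

definition closed_abs :: "('s \<Rightarrow> 's list) \<Rightarrow> 's abs \<Rightarrow> 's list \<Rightarrow> bool" where
  "closed_abs ob F \<sigma> = (fst F = \<sigma> \<and> wt ob (\<lambda>_. None) \<sigma> (snd F))"

definition pre_fp :: "('s \<Rightarrow> 's list) \<Rightarrow> nat set \<Rightarrow> (nat \<Rightarrow> 's abs) \<Rightarrow> (nat \<Rightarrow> 's abs) \<Rightarrow> bool" where
  "pre_fp ob I E F = (\<forall>i\<in>I. closed_abs ob (F i) (fst (E i)) \<and> abs_le (inst E F i) (F i))"

definition post_fp :: "('s \<Rightarrow> 's list) \<Rightarrow> nat set \<Rightarrow> (nat \<Rightarrow> 's abs) \<Rightarrow> (nat \<Rightarrow> 's abs) \<Rightarrow> bool" where
  "post_fp ob I E F = (\<forall>i\<in>I. closed_abs ob (F i) (fst (E i)) \<and> abs_le (F i) (inst E F i))"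

definition extends_sys :: "('s \<Rightarrow> 's list) \<Rightarrow> nat set \<Rightarrow> (nat \<Rightarrow> 's abs)
     \<Rightarrow> nat set \<Rightarrow> (nat \<Rightarrow> 's abs) \<Rightarrow> bool" where
  "extends_sys ob I E I' E' =
    (\<exists>J. I' - J = I
       \<and> (\<forall>F. pre_fp ob I E F \<longrightarrow> (\<exists>F'. pre_fp ob I' E' F' \<and> (\<forall>i\<in>I. F' i = F i)))
       \<and> (\<forall>F. post_fp ob I E F \<longrightarrow> (\<exists>F'. post_fp ob I' E' F' \<and> (\<forall>i\<in>I. F' i = F i))))"

text \<open>Syntactic solution K_{E,i} (applied to fresh names).\<close>
definition sysfun :: "nat set \<Rightarrow> (nat \<Rightarrow> 's abs) \<Rightarrow> nat \<Rightarrow> 's abs" where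
  "sysfun I E j = (if j \<in> I then E j else ([], PNil))"

definition synsol :: "nat set \<Rightarrow> (nat \<Rightarrow> 's abs) \<Rightarrow> nat \<Rightarrow> 's abs" where
  "synsol I E i = (fst (E i), PSol (sysfun I E) i [0..<length (fst (E i))])"

definition abs_tuple_le :: "nat set \<Rightarrow> (nat \<Rightarrow> 's abs) \<Rightarrow> (nat \<Rightarrow> 's abs) \<Rightarrow> bool" where
  "abs_tuple_le I F G = (\<forall>i\<in>I. abs_le (F i) (G i))"

end

theory Submission
  imports Defs
begin

lemma up_0[simp]: "up 0 f = f"
  by (simp add: up_def fun_eq_iff)

lemma up_up: "up a (up b f) = up (a + b) f"
  by (auto simp: up_def fun_eq_iff)

lemma up_comp: "up k f \<circ> up k g = up k (f \<circ> g)"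
  by (auto simp: up_def fun_eq_iff)

lemma up_id[simp]: "up k (\<lambda>i. i) = (\<lambda>i. i)"
  by (auto simp: up_def fun_eq_iff)

lemma up_shift: "up k f (i + k) = f i + k"
  by (simp add: up_def)

lemma inj_up: "inj f \<Longrightarrow> inj (up k f)"
  unfolding inj_def up_def
proof (intro allI impI)
  fix x y assume f: "\<forall>x y. f x = f y \<longrightarrow> x = y"
    and e: "(if x < k then x else f (x - k) + k) = (if y < k then y else f (y - k) + k)"
  show "x = y"
  proof (cases "x < k"; cases "y < k")
    assume "\<not> x < k" "\<not> y < k"
    then show ?thesis using e f by (metis add_right_cancel le_add_diff_inverse2 not_less)
  qed (use e in auto)
qed

lemma ren_ren: "ren f (ren g P) = ren (f \<circ> g) P"
  by (induction P arbitrary: f g) (simp_all add: up_comp)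

lemma ren_ren': "ren f (ren g P) = ren (\<lambda>i. f (g i)) P"
  using ren_ren[of f g P] by (simp add: comp_def)

lemma ren_id[simp]: "ren (\<lambda>i. i) P = P"
  by (induction P) (simp_all add: map_idI)

lemma ren_id'[simp]: "ren id P = P"
  using ren_id by (metis id_apply ext)

lemma ren_resn: "ren f (resn k P) = resn k (ren (up k f) P)"
  by (induction k arbitrary: f) (simp_all add: up_up)

lemma up_shift_fun: "(\<lambda>i. up k f (i + k)) = (\<lambda>i. f i + k)"
  by (simp add: up_shift)

lemma ren_shift_comm: "ren (up k f) (ren (\<lambda>i. i + k) Q) = ren (\<lambda>i. i + k) (ren f Q)"
  by (simp add: ren_ren' up_shift)

lemma swp_comm: "up (Suc 0) (up k f) (swp k i) = swp k (up k (up (Suc 0) f) i)"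
  by (auto simp: up_def swp_def)

lemma ren_swp_comm: "ren (up 1 (up k f)) (ren (swp k) P) = ren (swp k) (ren (up k (up 1 f)) P)"
  by (simp add: ren_ren' swp_comm)

lemma inj_swp: "inj (swp k)"
  unfolding inj_def swp_def by auto

lemma inj_shift: "inj (\<lambda>i. i + (k::nat))"
  unfolding inj_def by auto

primrec fvb :: "nat \<Rightarrow> 's pr \<Rightarrow> bool" where
  "fvb n PNil = True"
| "fvb n (PIn a k P) = (a < n \<and> fvb (k + n) P)"
| "fvb n (POut a k P) = (a < n \<and> fvb (k + n) P)"
| "fvb n (PRes P) = fvb (Suc n) P"
| "fvb n (PPar P Q) = (fvb n P \<and> fvb n Q)"
| "fvb n (PRep a k P) = (a < n \<and> fvb (k + n) P)"
| "fvb n (PVar i xs) = (\<forall>x\<in>set xs. x < n)"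
| "fvb n (PSol E i xs) = (\<forall>x\<in>set xs. x < n)"

lemma up_agree: "(\<forall>i<n. f i = g i) \<Longrightarrow> \<forall>i<k + n. up k f i = up k g i"
  by (auto simp: up_def)

lemma ren_cong: "fvb n P \<Longrightarrow> (\<forall>i<n. f i = g i) \<Longrightarrow> ren f P = ren g P"
proof (induction P arbitrary: n f g)
  case (PRes P)
  then show ?case using up_agree[of n f g 1] by simp
qed (auto simp: up_agree)

lemma up_bound: "(\<forall>i<n. f i < m) \<Longrightarrow> \<forall>i<k + n. up k f i < k + m"
  by (auto simp: up_def)

lemma fvb_ren: "fvb n P \<Longrightarrow> (\<forall>i<n. f i < m) \<Longrightarrow> fvb m (ren f P)"
proof (induction P arbitrary: n m f)
  case (PRes P)
  then show ?case using up_bound[of n f m 1] by simp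
qed (auto simp: up_bound)

lemma fvb_mono: "fvb n P \<Longrightarrow> n \<le> m \<Longrightarrow> fvb m P"
proof (induction P arbitrary: n m)
  case (PRes P)
  then show ?case by (metis Suc_le_mono fvb.simps(4))
qed (auto simp: order_less_le_trans)

lemma ren_id_fvb: "fvb n P \<Longrightarrow> (\<forall>i<n. f i = i) \<Longrightarrow> ren f P = P"
  using ren_cong[of n P f "\<lambda>i. i"] by simp

fun ract :: "(nat \<Rightarrow> nat) \<Rightarrow> act \<Rightarrow> act" where
  "ract f Tau = Tau" | "ract f (InA a k) = InA (f a) k" | "ract f (OutA a k) = OutA (f a) k"

fun rtr :: "(nat \<Rightarrow> nat) \<Rightarrow> act list \<Rightarrow> act list" where
  "rtr f [] = []" | "rtr f (\<mu> # s) = ract f \<mu> # rtr (up (ar \<mu>) f) s"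

lemma ar_ract[simp]: "ar (ract f \<mu>) = ar \<mu>"
  by (cases \<mu>) auto

lemma ract_tau_iff[simp]: "(ract f \<mu> = Tau) = (\<mu> = Tau)"
  by (cases \<mu>) auto

inductive goodP :: "(nat \<Rightarrow> nat option) \<Rightarrow> 's pr \<Rightarrow> bool" where
  g_nil: "goodP vs PNil"
| g_in: "goodP vs P \<Longrightarrow> goodP vs (PIn a k P)"
| g_out: "goodP vs P \<Longrightarrow> goodP vs (POut a k P)"
| g_rep: "goodP vs P \<Longrightarrow> goodP vs (PRep a k P)"
| g_res: "goodP vs P \<Longrightarrow> goodP vs (PRes P)"
| g_par: "goodP vs P \<Longrightarrow> goodP vs Q \<Longrightarrow> goodP vs (PPar P Q)"
| g_var: "vs i = Some (length xs) \<Longrightarrow> distinct xs \<Longrightarrow> goodP vs (PVar i xs)"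
| g_sol: "(\<forall>j. goodP (\<lambda>j. Some (length (fst (E j)))) (snd (E j))
              \<and> fvb (length (fst (E j))) (snd (E j)))
          \<Longrightarrow> length xs = length (fst (E i)) \<Longrightarrow> goodP vs (PSol E i xs)"

inductive_cases goodP_inv:
  "goodP vs PNil" "goodP vs (PIn a k P)" "goodP vs (POut a k P)" "goodP vs (PRep a k P)"
  "goodP vs (PRes P)" "goodP vs (PPar P Q)" "goodP vs (PVar i xs)" "goodP vs (PSol E i xs)"

abbreviation "nov \<equiv> (\<lambda>_::nat. (None :: nat option))"

lemma goodP_mono: "goodP vs P \<Longrightarrow> (\<forall>i m. vs i = Some m \<longrightarrow> vs' i = Some m) \<Longrightarrow> goodP vs' P"
  by (induction vs P rule: goodP.induct) (auto intro: goodP.intros)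

lemma goodP_none: "goodP nov P \<Longrightarrow> goodP vs P"
  using goodP_mono by fastforce

lemma goodP_ren: "goodP vs P \<Longrightarrow> inj f \<or> (\<forall>i. vs i = None) \<Longrightarrow> goodP vs (ren f P)"
proof (induction vs P arbitrary: f rule: goodP.induct)
  case (g_var vs i xs)
  then show ?case
    by (auto intro!: goodP.intros simp: distinct_map inj_on_def inj_def)
qed (auto intro!: goodP.intros simp: inj_up)

definition Hok :: "(nat \<Rightarrow> nat option) \<Rightarrow> (nat \<Rightarrow> 's abs) \<Rightarrow> bool" where
  "Hok vs H = (\<forall>j m. vs j = Some m \<longrightarrow> goodP nov (snd (H j)) \<and> fvb m (snd (H j)))"

lemma substV_good0: "goodP vs T \<Longrightarrow> Hok vs H \<Longrightarrow> goodP nov (substV H T)"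
proof (induction vs T rule: goodP.induct)
  case (g_var vs i xs)
  then show ?case by (auto simp: Hok_def intro!: goodP_ren)
qed (auto intro: goodP.intros)

lemma substV_good: "goodP vs T \<Longrightarrow> Hok vs H \<Longrightarrow> goodP vs' (substV H T)"
  using substV_good0 goodP_none by blast

lemma substV_fvb: "goodP vs T \<Longrightarrow> Hok vs H \<Longrightarrow> fvb n T \<Longrightarrow> fvb n (substV H T)"
proof (induction vs T arbitrary: n rule: goodP.induct)
  case (g_var vs i xs)
  then show ?case
    by (auto simp: Hok_def intro!: fvb_ren)
qed auto

lemma substV_ren: "goodP vs T \<Longrightarrow> Hok vs H \<Longrightarrow> ren f (substV H T) = substV H (ren f T)"
proof (induction vs T arbitrary: f rule: goodP.induct)
  case (g_var vs i xs)
  then have "fvb (length xs) (snd (H i))" by (auto simp: Hok_def)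
  then show ?case
    by (simp add: ren_ren') (rule ren_cong, auto)
qed auto

lemma substV_nov: "goodP nov T \<Longrightarrow> substV H T = T"
  by (induction "nov::nat \<Rightarrow> nat option" T rule: goodP.induct) auto

lemma substV_resn: "substV H (resn k P) = resn k (substV H P)"
  by (induction k) auto

lemma substV_cong: "goodP vs T \<Longrightarrow> (\<forall>j m. vs j = Some m \<longrightarrow> snd (H j) = snd (H' j))
   \<Longrightarrow> substV H T = substV H' T"
  by (induction vs T rule: goodP.induct) auto

definition solH :: "(nat \<Rightarrow> 's abs) \<Rightarrow> nat \<Rightarrow> 's abs" where
  "solH E = (\<lambda>j. (fst (E j), PSol E j [0..<length (fst (E j))]))"

lemma unfold_sol_def': "unfold_sol E i xs = ren (\<lambda>n. xs ! n) (substV (solH E) (snd (E i)))"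
  by (simp add: unfold_sol_def solH_def)

lemma solH_ok:
  assumes "\<forall>j. goodP (\<lambda>j. Some (length (fst (E j)))) (snd (E j)) \<and> fvb (length (fst (E j))) (snd (E j))"
  shows "Hok (\<lambda>j. Some (length (fst (E j)))) (solH E)"
  using assms by (auto simp: Hok_def solH_def intro!: goodP.intros)

lemma unfold_good: "goodP vs (PSol E i xs) \<Longrightarrow> goodP vs' (unfold_sol E i xs)"
  apply (erule goodP_inv)
  apply (simp add: unfold_sol_def')
  apply (rule goodP_none)
  apply (rule goodP_ren)
   apply (rule substV_good[where vs="\<lambda>j. Some (length (fst (E j)))"])
    apply blast
   apply (erule solH_ok)
  apply simp
  done

lemma unfold_ren: "goodP vs (PSol E i xs) \<Longrightarrow> ren f (unfold_sol E i xs) = unfold_sol E i (map f xs)"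
proof (erule goodP_inv)
  assume fam: "\<forall>j. goodP (\<lambda>j. Some (length (fst (E j)))) (snd (E j)) \<and> fvb (length (fst (E j))) (snd (E j))"
    and l: "length xs = length (fst (E i))"
  have "fvb (length xs) (substV (solH E) (snd (E i)))"
    using substV_fvb[OF _ solH_ok[OF fam]] fam l by metis
  then show ?thesis
    by (simp add: unfold_sol_def' ren_ren') (rule ren_cong, auto)
qed

lemma resn_good: "goodP vs P \<Longrightarrow> goodP vs (resn k P)"
  by (induction k) (auto intro: goodP.intros)

lemma step_good: "step P \<mu> P' \<Longrightarrow> goodP vs P \<Longrightarrow> goodP vs P'"
proof (induction P \<mu> P' arbitrary: vs rule: step.induct)
  case (s_sol E i xs \<mu> P')
  then show ?case using unfold_good by blast
next
  case (s_rep a k P)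
  then show ?case
    by (metis g_par goodP_inv(4) goodP_ren inj_shift)
next
  case (s_parl P \<mu> P' Q)
  then show ?case by (metis g_par goodP_inv(6) goodP_ren inj_shift)
next
  case (s_parr Q \<mu> Q' P)
  then show ?case by (metis g_par goodP_inv(6) goodP_ren inj_shift)
next
  case (s_comm1 P a k P' Q Q')
  then show ?case by (metis g_par goodP_inv(6) resn_good)
next
  case (s_comm2 P a k P' Q Q')
  then show ?case by (metis g_par goodP_inv(6) resn_good)
next
  case (s_res_in P a k P')
  then show ?case by (metis g_res goodP_inv(5) goodP_ren inj_swp)
next
  case (s_res_out P a k P')
  then show ?case by (metis g_res goodP_inv(5) goodP_ren inj_swp)
qed (auto elim!: goodP_inv intro!: goodP.intros)

lemma up1_Suc[simp]: "up (Suc 0) f (Suc a) = Suc (f a)"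
  by (simp add: up_def)

lemma up1_0[simp]: "up (Suc 0) f 0 = 0"
  by (simp add: up_def)

lemma ren_swp_comm1: "ren (up (Suc 0) (up k f)) (ren (swp k) P) = ren (swp k) (ren (up k (up (Suc 0) f)) P)"
  by (simp add: ren_ren' swp_comm)

lemma ract_InA: "(ract f \<mu> = InA a k) = (\<exists>a'. \<mu> = InA a' k \<and> f a' = a)"
  by (cases \<mu>) auto

lemma ract_OutA: "(ract f \<mu> = OutA a k) = (\<exists>a'. \<mu> = OutA a' k \<and> f a' = a)"
  by (cases \<mu>) auto

lemma step_ren: "step P \<mu> P' \<Longrightarrow> goodP vs P \<Longrightarrow> step (ren f P) (ract f \<mu>) (ren (up (ar \<mu>) f) P')"
proof (induction P \<mu> P' arbitrary: f vs rule: step.induct)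
  case (s_in a k P)
  then show ?case by (simp add: step.s_in)
next
  case (s_out a k P)
  then show ?case by (simp add: step.s_out)
next
  case (s_rep a k P)
  have e: "ren (up k f) (ren (\<lambda>i. i + k) (PRep a k P)) = ren (\<lambda>i. i+k) (PRep (f a) k (ren (up k f) P))"
    by (subst ren_shift_comm) simp
  have r1: "ren f (PRep a k P) = PRep (f a) k (ren (up k f) P)" by simp
  show ?case
    unfolding r1 ren.simps(5) e ract.simps ar.simps by (rule step.s_rep)
next
  case (s_parl P \<mu> P' Q)
  then have "step (ren f P) (ract f \<mu>) (ren (up (ar \<mu>) f) P')" by (blast elim: goodP_inv)
  from step.s_parl[OF this, of "ren f Q"] show ?case by (simp add: ren_shift_comm)
next
  case (s_parr Q \<mu> Q' P)
  then have "step (ren f Q) (ract f \<mu>) (ren (up (ar \<mu>) f) Q')" by (blast elim: goodP_inv)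
  from step.s_parr[OF this, of "ren f P"] show ?case by (simp add: ren_shift_comm)
next
  case (s_comm1 P a k P' Q Q')
  then have "step (ren f P) (InA (f a) k) (ren (up k f) P')" "step (ren f Q) (OutA (f a) k) (ren (up k f) Q')"
    by (fastforce elim: goodP_inv)+
  from step.s_comm1[OF this] show ?case by (simp add: ren_resn)
next
  case (s_comm2 P a k P' Q Q')
  then have "step (ren f P) (OutA (f a) k) (ren (up k f) P')" "step (ren f Q) (InA (f a) k) (ren (up k f) Q')"
    by (fastforce elim: goodP_inv)+
  from step.s_comm2[OF this] show ?case by (simp add: ren_resn)
next
  case (s_res_tau P P')
  then have "step (ren (up (Suc 0) f) P) Tau (ren (up (Suc 0) f) P')"
    by (fastforce elim: goodP_inv)
  from step.s_res_tau[OF this] show ?case by simp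
next
  case (s_res_in P a k P')
  from s_res_in.prems have g: "goodP vs P" by (blast elim: goodP_inv)
  have "step (ren (up (Suc 0) f) P) (ract (up (Suc 0) f) (InA (Suc a) k)) (ren (up (ar (InA (Suc a) k)) (up (Suc 0) f)) P')"
    by (rule s_res_in.IH[OF g])
  then have "step (ren (up (Suc 0) f) P) (InA (Suc (f a)) k) (ren (up k (up (Suc 0) f)) P')"
    by simp
  from step.s_res_in[OF this] show ?case by (simp add: ren_swp_comm1)
next
  case (s_res_out P a k P')
  from s_res_out.prems have g: "goodP vs P" by (blast elim: goodP_inv)
  have "step (ren (up (Suc 0) f) P) (ract (up (Suc 0) f) (OutA (Suc a) k)) (ren (up (ar (OutA (Suc a) k)) (up (Suc 0) f)) P')"
    by (rule s_res_out.IH[OF g])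
  then have "step (ren (up (Suc 0) f) P) (OutA (Suc (f a)) k) (ren (up k (up (Suc 0) f)) P')"
    by simp
  from step.s_res_out[OF this] show ?case by (simp add: ren_swp_comm1)
next
  case (s_sol E i xs \<mu> P')
  then have "step (ren f (unfold_sol E i xs)) (ract f \<mu>) (ren (up (ar \<mu>) f) P')"
    using unfold_good by blast
  then show ?case using unfold_ren[OF s_sol.prems] by (simp add: step.s_sol)
qed

lemma step_ren_refl:
  "step Y \<mu> X \<Longrightarrow> Y = ren f P \<Longrightarrow> inj f \<Longrightarrow> goodP vs P
   \<Longrightarrow> \<exists>\<mu>0 P0. step P \<mu>0 P0 \<and> \<mu> = ract f \<mu>0 \<and> X = ren (up (ar \<mu>0) f) P0"
proof (induction Y \<mu> X arbitrary: P f vs rule: step.induct)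
  case (s_in a k Q)
  then obtain a' P1 where "P = PIn a' k P1" "a = f a'" "Q = ren (up k f) P1" by (cases P) auto
  then show ?case using step.s_in by fastforce
next
  case (s_out a k Q)
  then obtain a' P1 where "P = POut a' k P1" "a = f a'" "Q = ren (up k f) P1" by (cases P) auto
  then show ?case using step.s_out by fastforce
next
  case (s_rep a k Q)
  then obtain a' P1 where P: "P = PRep a' k P1" "a = f a'" "Q = ren (up k f) P1" by (cases P) auto
  have e: "ren (up k f) (ren (\<lambda>i. i + k) (PRep a' k P1)) = ren (\<lambda>i. i+k) (PRep (f a') k (ren (up k f) P1))"
    by (subst ren_shift_comm) simp
  have "PPar Q (ren (\<lambda>i. i + k) (PRep a k Q)) = ren (up k f) (PPar P1 (ren (\<lambda>i. i + k) (PRep a' k P1)))"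
    unfolding ren.simps(5) e P by simp
  then show ?case
    using P step.s_rep by fastforce
next
  case (s_parl Y1 \<mu> Y1' Y2)
  then obtain P1 P2 where P: "P = PPar P1 P2" "Y1 = ren f P1" "Y2 = ren f P2" by (cases P) auto
  with s_parl obtain \<mu>0 P0 where h: "step P1 \<mu>0 P0" "\<mu> = ract f \<mu>0" "Y1' = ren (up (ar \<mu>0) f) P0"
    by (blast elim: goodP_inv)
  show ?case
    by (rule exI[of _ \<mu>0], rule exI[of _ "PPar P0 (ren (\<lambda>i. i + ar \<mu>0) P2)"])
      (simp add: P h step.s_parl ren_shift_comm)
next
  case (s_parr Y2 \<mu> Y2' Y1)
  then obtain P1 P2 where P: "P = PPar P1 P2" "Y1 = ren f P1" "Y2 = ren f P2" by (cases P) auto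
  with s_parr obtain \<mu>0 P0 where h: "step P2 \<mu>0 P0" "\<mu> = ract f \<mu>0" "Y2' = ren (up (ar \<mu>0) f) P0"
    by (blast elim: goodP_inv)
  show ?case
    by (rule exI[of _ \<mu>0], rule exI[of _ "PPar (ren (\<lambda>i. i + ar \<mu>0) P1) P0"])
      (simp add: P h step.s_parr ren_shift_comm)
next
  case (s_comm1 Y1 a k Y1' Y2 Y2')
  then obtain P1 P2 where P: "P = PPar P1 P2" "Y1 = ren f P1" "Y2 = ren f P2" by (cases P) auto
  with s_comm1 obtain \<mu>1 P1' where h1: "step P1 \<mu>1 P1'" "InA a k = ract f \<mu>1" "Y1' = ren (up (ar \<mu>1) f) P1'"
    by (blast elim: goodP_inv)
  from P s_comm1 obtain \<mu>2 P2' where h2: "step P2 \<mu>2 P2'" "OutA a k = ract f \<mu>2" "Y2' = ren (up (ar \<mu>2) f) P2'"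
    by (blast elim: goodP_inv)
  from h1(2) obtain b1 where b1: "\<mu>1 = InA b1 k" "f b1 = a" using ract_InA by metis
  from h2(2) obtain b2 where b2: "\<mu>2 = OutA b2 k" "f b2 = a" using ract_OutA by metis
  have "b1 = b2" using b1 b2 s_comm1.prems(2) by (metis injD)
  show ?case
    by (rule exI[of _ Tau], rule exI[of _ "resn k (PPar P1' P2')"])
      (use h1 h2 b1 b2 \<open>b1 = b2\<close> in \<open>simp add: P step.s_comm1 ren_resn\<close>)
next
  case (s_comm2 Y1 a k Y1' Y2 Y2')
  then obtain P1 P2 where P: "P = PPar P1 P2" "Y1 = ren f P1" "Y2 = ren f P2" by (cases P) auto
  with s_comm2 obtain \<mu>1 P1' where h1: "step P1 \<mu>1 P1'" "OutA a k = ract f \<mu>1" "Y1' = ren (up (ar \<mu>1) f) P1'"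
    by (blast elim: goodP_inv)
  from P s_comm2 obtain \<mu>2 P2' where h2: "step P2 \<mu>2 P2'" "InA a k = ract f \<mu>2" "Y2' = ren (up (ar \<mu>2) f) P2'"
    by (blast elim: goodP_inv)
  from h1(2) obtain b1 where b1: "\<mu>1 = OutA b1 k" "f b1 = a" using ract_OutA by metis
  from h2(2) obtain b2 where b2: "\<mu>2 = InA b2 k" "f b2 = a" using ract_InA by metis
  have "b1 = b2" using b1 b2 s_comm2.prems(2) by (metis injD)
  show ?case
    by (rule exI[of _ Tau], rule exI[of _ "resn k (PPar P1' P2')"])
      (use h1 h2 b1 b2 \<open>b1 = b2\<close> in \<open>simp add: P step.s_comm2 ren_resn\<close>)
next
  case (s_res_tau Y1 Y1')
  then obtain P1 where P: "P = PRes P1" "Y1 = ren (up (Suc 0) f) P1" by (cases P) auto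
  with s_res_tau obtain \<mu>0 P0 where h: "step P1 \<mu>0 P0" "Tau = ract (up (Suc 0) f) \<mu>0"
      "Y1' = ren (up (ar \<mu>0) (up (Suc 0) f)) P0"
    by (metis goodP_inv(5) inj_up)
  have "\<mu>0 = Tau" using h(2) by (metis ract_tau_iff)
  then show ?case
    by (intro exI[of _ Tau] exI[of _ "PRes P0"]) (use h(1,3) in \<open>simp add: P step.s_res_tau\<close>)
next
  case (s_res_in Y1 a k Y1')
  then obtain P1 where P: "P = PRes P1" "Y1 = ren (up (Suc 0) f) P1" by (cases P) auto
  with s_res_in obtain \<mu>0 P0 where h: "step P1 \<mu>0 P0" "InA (Suc a) k = ract (up (Suc 0) f) \<mu>0"
      "Y1' = ren (up (ar \<mu>0) (up (Suc 0) f)) P0"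
    by (metis goodP_inv(5) inj_up)
  from h(2) obtain b where b: "\<mu>0 = InA b k" "up (Suc 0) f b = Suc a" using ract_InA by metis
  then obtain b' where b': "b = Suc b'" "f b' = a" by (cases b) auto
  show ?case
    by (intro exI[of _ "InA b' k"] exI[of _ "PRes (ren (swp k) P0)"])
      (use h b b' in \<open>simp add: P step.s_res_in ren_swp_comm1\<close>)
next
  case (s_res_out Y1 a k Y1')
  then obtain P1 where P: "P = PRes P1" "Y1 = ren (up (Suc 0) f) P1" by (cases P) auto
  with s_res_out obtain \<mu>0 P0 where h: "step P1 \<mu>0 P0" "OutA (Suc a) k = ract (up (Suc 0) f) \<mu>0"
      "Y1' = ren (up (ar \<mu>0) (up (Suc 0) f)) P0"
    by (metis goodP_inv(5) inj_up)
  from h(2) obtain b where b: "\<mu>0 = OutA b k" "up (Suc 0) f b = Suc a" using ract_OutA by metis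
  then obtain b' where b': "b = Suc b'" "f b' = a" by (cases b) auto
  show ?case
    by (intro exI[of _ "OutA b' k"] exI[of _ "PRes (ren (swp k) P0)"])
      (use h b b' in \<open>simp add: P step.s_res_out ren_swp_comm1\<close>)
next
  case (s_sol E i ys \<mu> X)
  then obtain xs where P: "P = PSol E i xs" "ys = map f xs" by (cases P) auto
  have u: "unfold_sol E i ys = ren f (unfold_sol E i xs)"
    using unfold_ren s_sol.prems P by metis
  have g: "goodP vs (unfold_sol E i xs)" using unfold_good s_sol.prems P by metis
  from s_sol.IH[OF u s_sol.prems(2) g] obtain \<mu>0 P0 where
    "step (unfold_sol E i xs) \<mu>0 P0" "\<mu> = ract f \<mu>0" "X = ren (up (ar \<mu>0) f) P0" by blast
  then show ?case using P step.s_sol by blast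
qed

lemma wtr_ren: "wtr P s \<Longrightarrow> goodP vs P \<Longrightarrow> wtr (ren f P) (rtr f s)"
proof (induction P s arbitrary: f rule: wtr.induct)
  case (wtr_nil P)
  then show ?case by (simp add: wtr.wtr_nil)
next
  case (wtr_tau P Q s)
  then have "step (ren f P) Tau (ren f Q)" using step_ren[of P Tau Q vs f] by simp
  moreover have "wtr (ren f Q) (rtr f s)" using wtr_tau step_good by blast
  ultimately show ?case by (rule wtr.wtr_tau)
next
  case (wtr_vis P \<mu> Q s)
  then have "step (ren f P) (ract f \<mu>) (ren (up (ar \<mu>) f) Q)" using step_ren by blast
  moreover have "wtr (ren (up (ar \<mu>) f) Q) (rtr (up (ar \<mu>) f) s)" using wtr_vis step_good by blast
  ultimately show ?case using wtr_vis.hyps(2) by (simp add: wtr.wtr_vis)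
qed

lemma wtr_ren_refl: "wtr Y s \<Longrightarrow> Y = ren f P \<Longrightarrow> inj f \<Longrightarrow> goodP vs P \<Longrightarrow> \<exists>s0. wtr P s0 \<and> s = rtr f s0"
proof (induction Y s arbitrary: P f rule: wtr.induct)
  case (wtr_nil P)
  then show ?case using wtr.wtr_nil by fastforce
next
  case (wtr_tau Y X s)
  then obtain \<mu>0 P0 where h: "step P \<mu>0 P0" "Tau = ract f \<mu>0" "X = ren (up (ar \<mu>0) f) P0"
    using step_ren_refl by metis
  then have t: "\<mu>0 = Tau" by (metis ract_tau_iff)
  with h wtr_tau obtain s0 where "wtr P0 s0" "s = rtr f s0" using step_good by fastforce
  then show ?case using h t wtr.wtr_tau by blast
next
  case (wtr_vis Y \<mu> X s)
  then obtain \<mu>0 P0 where h: "step P \<mu>0 P0" "\<mu> = ract f \<mu>0" "X = ren (up (ar \<mu>0) f) P0"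
    using step_ren_refl by metis
  then have t: "\<mu>0 \<noteq> Tau" using wtr_vis by simp
  from h wtr_vis obtain s0 where "wtr P0 s0" "s = rtr (up (ar \<mu>0) f) s0" using step_good inj_up by metis
  then show ?case using h t wtr.wtr_vis by fastforce
qed

lemma tr_le_ren: "inj f \<Longrightarrow> goodP vs P \<Longrightarrow> goodP vs' Q \<Longrightarrow> tr_le P Q \<Longrightarrow> tr_le (ren f P) (ren f Q)"
  unfolding tr_le_def using wtr_ren wtr_ren_refl by metis

datatype 's ctx = CHole | CParL "'s ctx" "'s pr" | CParR "'s pr" "'s ctx" | CRes "'s ctx"

primrec plug :: "'s ctx \<Rightarrow> 's pr \<Rightarrow> 's pr" where
  "plug CHole P = P"
| "plug (CParL C R) P = PPar (plug C P) R"
| "plug (CParR R C) P = PPar R (plug C P)"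
| "plug (CRes C) P = PRes (plug C P)"

primrec renc :: "(nat \<Rightarrow> nat) \<Rightarrow> 's ctx \<Rightarrow> 's ctx" where
  "renc f CHole = CHole"
| "renc f (CParL C R) = CParL (renc f C) (ren f R)"
| "renc f (CParR R C) = CParR (ren f R) (renc f C)"
| "renc f (CRes C) = CRes (renc (up (Suc 0) f) C)"

primrec hren :: "'s ctx \<Rightarrow> (nat \<Rightarrow> nat) \<Rightarrow> nat \<Rightarrow> nat" where
  "hren CHole f = f"
| "hren (CParL C R) f = hren C f"
| "hren (CParR R C) f = hren C f"
| "hren (CRes C) f = hren C (up (Suc 0) f)"

primrec cres :: "nat \<Rightarrow> 's ctx \<Rightarrow> 's ctx" where
  "cres 0 C = C"
| "cres (Suc k) C = CRes (cres k C)"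

lemma ren_plug: "ren f (plug C P) = plug (renc f C) (ren (hren C f) P)"
  by (induction C arbitrary: f) auto

lemma inj_hren: "inj f \<Longrightarrow> inj (hren C f)"
  by (induction C arbitrary: f) (auto simp: inj_up)

lemma plug_cres: "plug (cres k C) P = resn k (plug C P)"
  by (induction k) auto

lemma step_parD: "step (PPar P Q) \<mu> X \<Longrightarrow>
    (\<exists>P'. step P \<mu> P' \<and> X = PPar P' (ren (\<lambda>i. i + ar \<mu>) Q))
  \<or> (\<exists>Q'. step Q \<mu> Q' \<and> X = PPar (ren (\<lambda>i. i + ar \<mu>) P) Q')
  \<or> (\<exists>a k P' Q'. \<mu> = Tau \<and> step P (InA a k) P' \<and> step Q (OutA a k) Q' \<and> X = resn k (PPar P' Q'))
  \<or> (\<exists>a k P' Q'. \<mu> = Tau \<and> step P (OutA a k) P' \<and> step Q (InA a k) Q' \<and> X = resn k (PPar P' Q'))"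
  by (erule step.cases) blast+

lemma step_resD: "step (PRes P) \<mu> X \<Longrightarrow>
    (\<mu> = Tau \<and> (\<exists>P'. step P Tau P' \<and> X = PRes P'))
  \<or> (\<exists>a k P'. \<mu> = InA a k \<and> step P (InA (Suc a) k) P' \<and> X = PRes (ren (swp k) P'))
  \<or> (\<exists>a k P'. \<mu> = OutA a k \<and> step P (OutA (Suc a) k) P' \<and> X = PRes (ren (swp k) P'))"
  by (erule step.cases) auto

definition D1 :: "'s ctx \<Rightarrow> 's pr \<Rightarrow> act \<Rightarrow> 's pr \<Rightarrow> bool" where
  "D1 C P \<mu> X = (\<exists>C' g. inj g \<and> X = plug C' (ren g P) \<and> (\<forall>Q. step (plug C Q) \<mu> (plug C' (ren g Q))))"

definition D2 :: "'s ctx \<Rightarrow> 's pr \<Rightarrow> act \<Rightarrow> 's pr \<Rightarrow> bool" where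
  "D2 C P \<mu> X = (\<exists>\<nu> P' C' g. inj g \<and> step P \<nu> P' \<and> X = plug C' (ren g P')
      \<and> (\<forall>Q Q'. step Q \<nu> Q' \<longrightarrow> step (plug C Q) \<mu> (plug C' (ren g Q')))
      \<and> (\<nu> = Tau \<longrightarrow> \<mu> = Tau \<and> C' = C \<and> g = id))"

lemma inj_id': "inj (id :: nat \<Rightarrow> nat)" by simp

lemma ren_swp_plug: "ren (swp k) (plug C' (ren g Q')) = plug (renc (swp k) C') (ren (hren C' (swp k) \<circ> g) Q')"
  by (simp add: ren_plug ren_ren)

lemma res_in_helper: "step (plug C1 Q) (InA (Suc a) k) (plug C' (ren g Q')) \<Longrightarrow>
   step (plug (CRes C1) Q) (InA a k) (plug (CRes (renc (swp k) C')) (ren (hren C' (swp k) \<circ> g) Q'))"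
  using step.s_res_in ren_swp_plug by (metis plug.simps(4))

lemma res_out_helper: "step (plug C1 Q) (OutA (Suc a) k) (plug C' (ren g Q')) \<Longrightarrow>
   step (plug (CRes C1) Q) (OutA a k) (plug (CRes (renc (swp k) C')) (ren (hren C' (swp k) \<circ> g) Q'))"
  using step.s_res_out ren_swp_plug by (metis plug.simps(4))

lemma ctx_step: "step (plug C P) \<mu> X \<Longrightarrow> D1 C P \<mu> X \<or> D2 C P \<mu> X"
proof (induction C arbitrary: \<mu> X)
  case CHole
  then have "D2 CHole P \<mu> X"
    unfolding D2_def by (intro exI[of _ \<mu>] exI[of _ X] exI[of _ CHole] exI[of _ id]) simp
  then show ?case by blast
next
  case (CParL C1 R)
  from step_parD[OF CParL.prems[simplified]] show ?case
  proof (elim disjE exE conjE)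
    fix Y assume s: "step (plug C1 P) \<mu> Y" and X: "X = PPar Y (ren (\<lambda>i. i + ar \<mu>) R)"
    from CParL.IH[OF s] show ?case
    proof
      assume "D1 C1 P \<mu> Y"
      then obtain C' g where h: "inj g" "Y = plug C' (ren g P)" "\<forall>Q. step (plug C1 Q) \<mu> (plug C' (ren g Q))"
        unfolding D1_def by blast
      have "D1 (CParL C1 R) P \<mu> X" unfolding D1_def
        by (intro exI[of _ "CParL C' (ren (\<lambda>i. i + ar \<mu>) R)"] exI[of _ g]) (simp add: h X step.s_parl)
      then show ?case by blast
    next
      assume "D2 C1 P \<mu> Y"
      then obtain \<nu> P' C' g where h: "inj g" "step P \<nu> P'" "Y = plug C' (ren g P')"
        "\<forall>Q Q'. step Q \<nu> Q' \<longrightarrow> step (plug C1 Q) \<mu> (plug C' (ren g Q'))"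
        "\<nu> = Tau \<longrightarrow> \<mu> = Tau \<and> C' = C1 \<and> g = id"
        unfolding D2_def by blast
      have "D2 (CParL C1 R) P \<mu> X" unfolding D2_def
        by (intro exI[of _ \<nu>] exI[of _ P'] exI[of _ "CParL C' (ren (\<lambda>i. i + ar \<mu>) R)"] exI[of _ g])
          (use h in \<open>auto simp: X step.s_parl\<close>)
      then show ?case by blast
    qed
  next
    fix R' assume s: "step R \<mu> R'" and X: "X = PPar (ren (\<lambda>i. i + ar \<mu>) (plug C1 P)) R'"
    have "D1 (CParL C1 R) P \<mu> X" unfolding D1_def
      apply (intro exI[of _ "CParL (renc (\<lambda>i. i + ar \<mu>) C1) R'"] exI[of _ "hren C1 (\<lambda>i. i + ar \<mu>)"])
      apply (simp add: X ren_plug inj_hren inj_shift)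
      using step.s_parr[OF s] ren_plug by metis
    then show ?case by blast
  next
    fix a k Y R' assume t: "\<mu> = Tau" and s: "step (plug C1 P) (InA a k) Y" and s2: "step R (OutA a k) R'"
      and X: "X = resn k (PPar Y R')"
    from CParL.IH[OF s] show ?case
    proof
      assume "D1 C1 P (InA a k) Y"
      then obtain C' g where h: "inj g" "Y = plug C' (ren g P)" "\<forall>Q. step (plug C1 Q) (InA a k) (plug C' (ren g Q))"
        unfolding D1_def by blast
      have l: "\<forall>Q. step (plug (CParL C1 R) Q) \<mu> (plug (cres k (CParL C' R')) (ren g Q))"
      proof
        fix Q
        have "step (plug C1 Q) (InA a k) (plug C' (ren g Q))" using h(3) by blast
        from step.s_comm1[OF this s2] show "step (plug (CParL C1 R) Q) \<mu> (plug (cres k (CParL C' R')) (ren g Q))"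
          by (simp add: t plug_cres)
      qed
      have X': "X = plug (cres k (CParL C' R')) (ren g P)" by (simp add: X h plug_cres)
      have "D1 (CParL C1 R) P \<mu> X" unfolding D1_def using h(1) l X' by blast
      then show ?case by blast
    next
      assume "D2 C1 P (InA a k) Y"
      then obtain \<nu> P' C' g where h: "inj g" "step P \<nu> P'" "Y = plug C' (ren g P')"
        "\<forall>Q Q'. step Q \<nu> Q' \<longrightarrow> step (plug C1 Q) (InA a k) (plug C' (ren g Q'))"
        "\<nu> = Tau \<longrightarrow> InA a k = Tau \<and> C' = C1 \<and> g = id"
        unfolding D2_def by blast
      have l: "\<forall>Q Q'. step Q \<nu> Q' \<longrightarrow> step (plug (CParL C1 R) Q) \<mu> (plug (cres k (CParL C' R')) (ren g Q'))"
      proof (intro allI impI)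
        fix Q Q' :: "'a pr" assume "step Q \<nu> Q'"
        then have "step (plug C1 Q) (InA a k) (plug C' (ren g Q'))" using h(4) by blast
        from step.s_comm1[OF this s2] show "step (plug (CParL C1 R) Q) \<mu> (plug (cres k (CParL C' R')) (ren g Q'))"
          by (simp add: t plug_cres)
      qed
      have nt: "\<nu> \<noteq> Tau" using h(5) by auto
      have X': "X = plug (cres k (CParL C' R')) (ren g P')" by (simp add: X h plug_cres)
      have "D2 (CParL C1 R) P \<mu> X" unfolding D2_def using h(1,2) l nt X' by blast
      then show ?case by blast
    qed
  next
    fix a k Y R' assume t: "\<mu> = Tau" and s: "step (plug C1 P) (OutA a k) Y" and s2: "step R (InA a k) R'"
      and X: "X = resn k (PPar Y R')"
    from CParL.IH[OF s] show ?case
    proof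
      assume "D1 C1 P (OutA a k) Y"
      then obtain C' g where h: "inj g" "Y = plug C' (ren g P)" "\<forall>Q. step (plug C1 Q) (OutA a k) (plug C' (ren g Q))"
        unfolding D1_def by blast
      have l: "\<forall>Q. step (plug (CParL C1 R) Q) \<mu> (plug (cres k (CParL C' R')) (ren g Q))"
      proof
        fix Q
        have "step (plug C1 Q) (OutA a k) (plug C' (ren g Q))" using h(3) by blast
        from step.s_comm2[OF this s2] show "step (plug (CParL C1 R) Q) \<mu> (plug (cres k (CParL C' R')) (ren g Q))"
          by (simp add: t plug_cres)
      qed
      have X': "X = plug (cres k (CParL C' R')) (ren g P)" by (simp add: X h plug_cres)
      have "D1 (CParL C1 R) P \<mu> X" unfolding D1_def using h(1) l X' by blast
      then show ?case by blast
    next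
      assume "D2 C1 P (OutA a k) Y"
      then obtain \<nu> P' C' g where h: "inj g" "step P \<nu> P'" "Y = plug C' (ren g P')"
        "\<forall>Q Q'. step Q \<nu> Q' \<longrightarrow> step (plug C1 Q) (OutA a k) (plug C' (ren g Q'))"
        "\<nu> = Tau \<longrightarrow> OutA a k = Tau \<and> C' = C1 \<and> g = id"
        unfolding D2_def by blast
      have l: "\<forall>Q Q'. step Q \<nu> Q' \<longrightarrow> step (plug (CParL C1 R) Q) \<mu> (plug (cres k (CParL C' R')) (ren g Q'))"
      proof (intro allI impI)
        fix Q Q' :: "'a pr" assume "step Q \<nu> Q'"
        then have "step (plug C1 Q) (OutA a k) (plug C' (ren g Q'))" using h(4) by blast
        from step.s_comm2[OF this s2] show "step (plug (CParL C1 R) Q) \<mu> (plug (cres k (CParL C' R')) (ren g Q'))"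
          by (simp add: t plug_cres)
      qed
      have nt: "\<nu> \<noteq> Tau" using h(5) by auto
      have X': "X = plug (cres k (CParL C' R')) (ren g P')" by (simp add: X h plug_cres)
      have "D2 (CParL C1 R) P \<mu> X" unfolding D2_def using h(1,2) l nt X' by blast
      then show ?case by blast
    qed
  qed
next
  case (CParR R C1)
  from step_parD[OF CParR.prems[simplified]] show ?case
  proof (elim disjE exE conjE)
    fix Y assume s: "step (plug C1 P) \<mu> Y" and X: "X = PPar (ren (\<lambda>i. i + ar \<mu>) R) Y"
    from CParR.IH[OF s] show ?case
    proof
      assume "D1 C1 P \<mu> Y"
      then obtain C' g where h: "inj g" "Y = plug C' (ren g P)" "\<forall>Q. step (plug C1 Q) \<mu> (plug C' (ren g Q))"
        unfolding D1_def by blast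
      have "D1 (CParR R C1) P \<mu> X" unfolding D1_def
        by (intro exI[of _ "CParR (ren (\<lambda>i. i + ar \<mu>) R) C'"] exI[of _ g]) (simp add: h X step.s_parr)
      then show ?case by blast
    next
      assume "D2 C1 P \<mu> Y"
      then obtain \<nu> P' C' g where h: "inj g" "step P \<nu> P'" "Y = plug C' (ren g P')"
        "\<forall>Q Q'. step Q \<nu> Q' \<longrightarrow> step (plug C1 Q) \<mu> (plug C' (ren g Q'))"
        "\<nu> = Tau \<longrightarrow> \<mu> = Tau \<and> C' = C1 \<and> g = id"
        unfolding D2_def by blast
      have "D2 (CParR R C1) P \<mu> X" unfolding D2_def
        by (intro exI[of _ \<nu>] exI[of _ P'] exI[of _ "CParR (ren (\<lambda>i. i + ar \<mu>) R) C'"] exI[of _ g])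
          (use h in \<open>auto simp: X step.s_parr\<close>)
      then show ?case by blast
    qed
  next
    fix R' assume s: "step R \<mu> R'" and X: "X = PPar R' (ren (\<lambda>i. i + ar \<mu>) (plug C1 P))"
    have "D1 (CParR R C1) P \<mu> X" unfolding D1_def
      apply (intro exI[of _ "CParR R' (renc (\<lambda>i. i + ar \<mu>) C1)"] exI[of _ "hren C1 (\<lambda>i. i + ar \<mu>)"])
      apply (simp add: X ren_plug inj_hren inj_shift)
      using step.s_parl[OF s] ren_plug by metis
    then show ?case by blast
  next
    fix a k R' Y assume t: "\<mu> = Tau" and s2: "step R (InA a k) R'" and s: "step (plug C1 P) (OutA a k) Y"
      and X: "X = resn k (PPar R' Y)"
    from CParR.IH[OF s] show ?case
    proof
      assume "D1 C1 P (OutA a k) Y"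
      then obtain C' g where h: "inj g" "Y = plug C' (ren g P)" "\<forall>Q. step (plug C1 Q) (OutA a k) (plug C' (ren g Q))"
        unfolding D1_def by blast
      have l: "\<forall>Q. step (plug (CParR R C1) Q) \<mu> (plug (cres k (CParR R' C')) (ren g Q))"
      proof
        fix Q
        have "step (plug C1 Q) (OutA a k) (plug C' (ren g Q))" using h(3) by blast
        from step.s_comm1[OF s2 this] show "step (plug (CParR R C1) Q) \<mu> (plug (cres k (CParR R' C')) (ren g Q))"
          by (simp add: t plug_cres)
      qed
      have X': "X = plug (cres k (CParR R' C')) (ren g P)" by (simp add: X h plug_cres)
      have "D1 (CParR R C1) P \<mu> X" unfolding D1_def using h(1) l X' by blast
      then show ?case by blast
    next
      assume "D2 C1 P (OutA a k) Y"
      then obtain \<nu> P' C' g where h: "inj g" "step P \<nu> P'" "Y = plug C' (ren g P')"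
        "\<forall>Q Q'. step Q \<nu> Q' \<longrightarrow> step (plug C1 Q) (OutA a k) (plug C' (ren g Q'))"
        "\<nu> = Tau \<longrightarrow> OutA a k = Tau \<and> C' = C1 \<and> g = id"
        unfolding D2_def by blast
      have l: "\<forall>Q Q'. step Q \<nu> Q' \<longrightarrow> step (plug (CParR R C1) Q) \<mu> (plug (cres k (CParR R' C')) (ren g Q'))"
      proof (intro allI impI)
        fix Q Q' :: "'a pr" assume "step Q \<nu> Q'"
        then have "step (plug C1 Q) (OutA a k) (plug C' (ren g Q'))" using h(4) by blast
        from step.s_comm1[OF s2 this] show "step (plug (CParR R C1) Q) \<mu> (plug (cres k (CParR R' C')) (ren g Q'))"
          by (simp add: t plug_cres)
      qed
      have nt: "\<nu> \<noteq> Tau" using h(5) by auto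
      have X': "X = plug (cres k (CParR R' C')) (ren g P')" by (simp add: X h plug_cres)
      have "D2 (CParR R C1) P \<mu> X" unfolding D2_def using h(1,2) l nt X' by blast
      then show ?case by blast
    qed
  next
    fix a k R' Y assume t: "\<mu> = Tau" and s2: "step R (OutA a k) R'" and s: "step (plug C1 P) (InA a k) Y"
      and X: "X = resn k (PPar R' Y)"
    from CParR.IH[OF s] show ?case
    proof
      assume "D1 C1 P (InA a k) Y"
      then obtain C' g where h: "inj g" "Y = plug C' (ren g P)" "\<forall>Q. step (plug C1 Q) (InA a k) (plug C' (ren g Q))"
        unfolding D1_def by blast
      have l: "\<forall>Q. step (plug (CParR R C1) Q) \<mu> (plug (cres k (CParR R' C')) (ren g Q))"
      proof
        fix Q
        have "step (plug C1 Q) (InA a k) (plug C' (ren g Q))" using h(3) by blast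
        from step.s_comm2[OF s2 this] show "step (plug (CParR R C1) Q) \<mu> (plug (cres k (CParR R' C')) (ren g Q))"
          by (simp add: t plug_cres)
      qed
      have X': "X = plug (cres k (CParR R' C')) (ren g P)" by (simp add: X h plug_cres)
      have "D1 (CParR R C1) P \<mu> X" unfolding D1_def using h(1) l X' by blast
      then show ?case by blast
    next
      assume "D2 C1 P (InA a k) Y"
      then obtain \<nu> P' C' g where h: "inj g" "step P \<nu> P'" "Y = plug C' (ren g P')"
        "\<forall>Q Q'. step Q \<nu> Q' \<longrightarrow> step (plug C1 Q) (InA a k) (plug C' (ren g Q'))"
        "\<nu> = Tau \<longrightarrow> InA a k = Tau \<and> C' = C1 \<and> g = id"
        unfolding D2_def by blast
      have l: "\<forall>Q Q'. step Q \<nu> Q' \<longrightarrow> step (plug (CParR R C1) Q) \<mu> (plug (cres k (CParR R' C')) (ren g Q'))"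
      proof (intro allI impI)
        fix Q Q' :: "'a pr" assume "step Q \<nu> Q'"
        then have "step (plug C1 Q) (InA a k) (plug C' (ren g Q'))" using h(4) by blast
        from step.s_comm2[OF s2 this] show "step (plug (CParR R C1) Q) \<mu> (plug (cres k (CParR R' C')) (ren g Q'))"
          by (simp add: t plug_cres)
      qed
      have nt: "\<nu> \<noteq> Tau" using h(5) by auto
      have X': "X = plug (cres k (CParR R' C')) (ren g P')" by (simp add: X h plug_cres)
      have "D2 (CParR R C1) P \<mu> X" unfolding D2_def using h(1,2) l nt X' by blast
      then show ?case by blast
    qed
  qed
next
  case (CRes C1)
  from step_resD[OF CRes.prems[simplified]] show ?case
  proof (elim disjE exE conjE)
    fix Y assume t: "\<mu> = Tau" and s: "step (plug C1 P) Tau Y" and X: "X = PRes Y"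
    from CRes.IH[OF s] show ?case
    proof
      assume "D1 C1 P Tau Y"
      then obtain C' g where h: "inj g" "Y = plug C' (ren g P)" "\<forall>Q. step (plug C1 Q) Tau (plug C' (ren g Q))"
        unfolding D1_def by blast
      have "D1 (CRes C1) P \<mu> X" unfolding D1_def
        by (intro exI[of _ "CRes C'"] exI[of _ g]) (simp add: h X t step.s_res_tau)
      then show ?case by blast
    next
      assume "D2 C1 P Tau Y"
      then obtain \<nu> P' C' g where h: "inj g" "step P \<nu> P'" "Y = plug C' (ren g P')"
        "\<forall>Q Q'. step Q \<nu> Q' \<longrightarrow> step (plug C1 Q) Tau (plug C' (ren g Q'))"
        "\<nu> = Tau \<longrightarrow> Tau = Tau \<and> C' = C1 \<and> g = id"
        unfolding D2_def by blast
      have "D2 (CRes C1) P \<mu> X" unfolding D2_def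
        by (intro exI[of _ \<nu>] exI[of _ P'] exI[of _ "CRes C'"] exI[of _ g])
          (use h in \<open>auto simp: X t step.s_res_tau\<close>)
      then show ?case by blast
    qed
  next
    fix a k Y assume t: "\<mu> = InA a k" and s: "step (plug C1 P) (InA (Suc a) k) Y" and X: "X = PRes (ren (swp k) Y)"
    from CRes.IH[OF s] show ?case
    proof
      assume "D1 C1 P (InA (Suc a) k) Y"
      then obtain C' g where h: "inj g" "Y = plug C' (ren g P)" "\<forall>Q. step (plug C1 Q) (InA (Suc a) k) (plug C' (ren g Q))"
        unfolding D1_def by blast
      have "D1 (CRes C1) P \<mu> X" unfolding D1_def
        apply (intro exI[of _ "CRes (renc (swp k) C')"] exI[of _ "hren C' (swp k) \<circ> g"])
        using h(1) res_in_helper[OF h(3)[rule_format]] by (auto simp: X t h(2) ren_swp_plug inj_hren inj_swp inj_compose)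
      then show ?case by blast
    next
      assume "D2 C1 P (InA (Suc a) k) Y"
      then obtain \<nu> P' C' g where h: "inj g" "step P \<nu> P'" "Y = plug C' (ren g P')"
        "\<forall>Q Q'. step Q \<nu> Q' \<longrightarrow> step (plug C1 Q) (InA (Suc a) k) (plug C' (ren g Q'))"
        "\<nu> = Tau \<longrightarrow> InA (Suc a) k = Tau \<and> C' = C1 \<and> g = id"
        unfolding D2_def by blast
      have l: "\<forall>Q Q'. step Q \<nu> Q' \<longrightarrow> step (plug (CRes C1) Q) \<mu> (plug (CRes (renc (swp k) C')) (ren (hren C' (swp k) \<circ> g) Q'))"
      proof (intro allI impI)
        fix Q Q' :: "'a pr" assume "step Q \<nu> Q'"
        from res_in_helper[OF h(4)[rule_format, OF this]]
        show "step (plug (CRes C1) Q) \<mu> (plug (CRes (renc (swp k) C')) (ren (hren C' (swp k) \<circ> g) Q'))"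
          by (simp add: t)
      qed
      have "D2 (CRes C1) P \<mu> X" unfolding D2_def
        apply (intro exI[of _ \<nu>] exI[of _ P'] exI[of _ "CRes (renc (swp k) C')"] exI[of _ "hren C' (swp k) \<circ> g"])
        using h(1,2,5) l by (auto simp: X t h(3) ren_swp_plug inj_hren inj_swp inj_compose)
      then show ?case by blast
    qed
  next
    fix a k Y assume t: "\<mu> = OutA a k" and s: "step (plug C1 P) (OutA (Suc a) k) Y" and X: "X = PRes (ren (swp k) Y)"
    from CRes.IH[OF s] show ?case
    proof
      assume "D1 C1 P (OutA (Suc a) k) Y"
      then obtain C' g where h: "inj g" "Y = plug C' (ren g P)" "\<forall>Q. step (plug C1 Q) (OutA (Suc a) k) (plug C' (ren g Q))"
        unfolding D1_def by blast
      have "D1 (CRes C1) P \<mu> X" unfolding D1_def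
        apply (intro exI[of _ "CRes (renc (swp k) C')"] exI[of _ "hren C' (swp k) \<circ> g"])
        using h(1) res_out_helper[OF h(3)[rule_format]] by (auto simp: X t h(2) ren_swp_plug inj_hren inj_swp inj_compose)
      then show ?case by blast
    next
      assume "D2 C1 P (OutA (Suc a) k) Y"
      then obtain \<nu> P' C' g where h: "inj g" "step P \<nu> P'" "Y = plug C' (ren g P')"
        "\<forall>Q Q'. step Q \<nu> Q' \<longrightarrow> step (plug C1 Q) (OutA (Suc a) k) (plug C' (ren g Q'))"
        "\<nu> = Tau \<longrightarrow> OutA (Suc a) k = Tau \<and> C' = C1 \<and> g = id"
        unfolding D2_def by blast
      have l: "\<forall>Q Q'. step Q \<nu> Q' \<longrightarrow> step (plug (CRes C1) Q) \<mu> (plug (CRes (renc (swp k) C')) (ren (hren C' (swp k) \<circ> g) Q'))"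
      proof (intro allI impI)
        fix Q Q' :: "'a pr" assume "step Q \<nu> Q'"
        from res_out_helper[OF h(4)[rule_format, OF this]]
        show "step (plug (CRes C1) Q) \<mu> (plug (CRes (renc (swp k) C')) (ren (hren C' (swp k) \<circ> g) Q'))"
          by (simp add: t)
      qed
      have "D2 (CRes C1) P \<mu> X" unfolding D2_def
        apply (intro exI[of _ \<nu>] exI[of _ P'] exI[of _ "CRes (renc (swp k) C')"] exI[of _ "hren C' (swp k) \<circ> g"])
        using h(1,2,5) l by (auto simp: X t h(3) ren_swp_plug inj_hren inj_swp inj_compose)
      then show ?case by blast
    qed
  qed
qed

abbreviation tstar :: "'s pr \<Rightarrow> 's pr \<Rightarrow> bool" where
  "tstar \<equiv> (\<lambda>A B. step A Tau B)\<^sup>*\<^sup>*"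

lemma wtr_tstar: "tstar A B \<Longrightarrow> wtr B s \<Longrightarrow> wtr A s"
  by (induction rule: converse_rtranclp_induct) (auto intro: wtr.wtr_tau)

lemma tstar_good: "tstar A B \<Longrightarrow> goodP vs A \<Longrightarrow> goodP vs B"
  by (induction rule: rtranclp_induct) (auto intro: step_good)

lemma wtr_vis_inv: "wtr Q s \<Longrightarrow> s = \<nu> # t \<Longrightarrow> \<exists>Q1 Q2. tstar Q Q1 \<and> step Q1 \<nu> Q2 \<and> wtr Q2 t"
proof (induction Q s rule: wtr.induct)
  case (wtr_tau P Q s)
  then show ?case by (meson converse_rtranclp_into_rtranclp)
qed auto

lemma plug_tau: "step Q Tau Q' \<Longrightarrow> step (plug C Q) Tau (plug C Q')"
proof (induction C)
  case (CParL C R)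
  then show ?case using step.s_parl[of "plug C Q" Tau "plug C Q'" R] by simp
next
  case (CParR R C)
  then show ?case using step.s_parr[of "plug C Q" Tau "plug C Q'" R] by simp
qed (auto intro: step.s_res_tau)

lemma plug_tstar: "tstar Q Q' \<Longrightarrow> tstar (plug C Q) (plug C Q')"
  by (induction rule: rtranclp_induct) (auto intro: plug_tau rtranclp.rtrancl_into_rtrancl)

lemma proj: "wtr S s \<Longrightarrow> S = plug C P \<Longrightarrow> goodP nov P \<Longrightarrow>
   \<exists>t. wtr P t \<and> (\<forall>Q. goodP nov Q \<longrightarrow> wtr Q t \<longrightarrow> wtr (plug C Q) s)"
proof (induction S s arbitrary: C P rule: wtr.induct)
  case (wtr_nil S)
  then show ?case by (auto intro: wtr.wtr_nil)
next
  case (wtr_tau S X s)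
  from ctx_step[OF wtr_tau.hyps(1)[unfolded wtr_tau.prems(1)]] show ?case
  proof
    assume "D1 C P Tau X"
    then obtain C' g where h: "inj g" "X = plug C' (ren g P)" "\<forall>Q. step (plug C Q) Tau (plug C' (ren g Q))"
      unfolding D1_def by blast
    have gp: "goodP nov (ren g P)" using goodP_ren wtr_tau.prems(2) by blast
    from wtr_tau.IH[OF h(2) gp] obtain t' where t': "wtr (ren g P) t'"
      "\<forall>Q. goodP nov Q \<longrightarrow> wtr Q t' \<longrightarrow> wtr (plug C' Q) s" by blast
    from wtr_ren_refl[OF t'(1) refl h(1) wtr_tau.prems(2)] obtain t0 where
      t0: "wtr P t0" "t' = rtr g t0" by blast
    show ?case
    proof (intro exI conjI allI impI)
      show "wtr P t0" by fact
      fix Q :: "'a pr" assume q: "goodP nov Q" "wtr Q t0"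
      have "wtr (ren g Q) t'" using wtr_ren[OF q(2) q(1)] t0 by simp
      then have "wtr (plug C' (ren g Q)) s" using t'(2) goodP_ren q(1) by blast
      then show "wtr (plug C Q) s" using h(3) wtr.wtr_tau by blast
    qed
  next
    assume "D2 C P Tau X"
    then obtain \<nu> P' C' g where h: "inj g" "step P \<nu> P'" "X = plug C' (ren g P')"
        "\<forall>Q Q'. step Q \<nu> Q' \<longrightarrow> step (plug C Q) Tau (plug C' (ren g Q'))"
        "\<nu> = Tau \<longrightarrow> Tau = Tau \<and> C' = C \<and> g = id"
      unfolding D2_def by blast
    have gP': "goodP nov P'" using step_good h(2) wtr_tau.prems(2) by blast
    show ?case
    proof (cases "\<nu> = Tau")
      case True
      then have X: "X = plug C P'" using h by simp
      from wtr_tau.IH[OF X gP'] obtain t where t: "wtr P' t"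
        "\<forall>Q. goodP nov Q \<longrightarrow> wtr Q t \<longrightarrow> wtr (plug C Q) s" by blast
      then show ?thesis using h(2) True wtr.wtr_tau by blast
    next
      case False
      have gp: "goodP nov (ren g P')" using goodP_ren gP' by blast
      from wtr_tau.IH[OF h(3) gp] obtain t' where t': "wtr (ren g P') t'"
        "\<forall>Q. goodP nov Q \<longrightarrow> wtr Q t' \<longrightarrow> wtr (plug C' Q) s" by blast
      from wtr_ren_refl[OF t'(1) refl h(1) gP'] obtain t0 where
        t0: "wtr P' t0" "t' = rtr g t0" by blast
      show ?thesis
      proof (intro exI conjI allI impI)
        show "wtr P (\<nu> # t0)" using h(2) False t0(1) wtr.wtr_vis by blast
        fix Q :: "'a pr" assume q: "goodP nov Q" "wtr Q (\<nu> # t0)"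
        from wtr_vis_inv[OF q(2) refl] obtain Q1 Q2 where
          qq: "tstar Q Q1" "step Q1 \<nu> Q2" "wtr Q2 t0" by blast
        have gQ2: "goodP nov Q2" using qq tstar_good step_good q(1) by blast
        have "wtr (ren g Q2) t'" using wtr_ren[OF qq(3) gQ2] t0 by simp
        then have "wtr (plug C' (ren g Q2)) s" using t'(2) goodP_ren gQ2 by blast
        then have "wtr (plug C Q1) s" using h(4) qq(2) wtr.wtr_tau by blast
        then show "wtr (plug C Q) s" using wtr_tstar plug_tstar qq(1) by blast
      qed
    qed
  qed
next
  case (wtr_vis S \<mu> X s)
  from ctx_step[OF wtr_vis.hyps(1)[unfolded wtr_vis.prems(1)]] show ?case
  proof
    assume "D1 C P \<mu> X"
    then obtain C' g where h: "inj g" "X = plug C' (ren g P)" "\<forall>Q. step (plug C Q) \<mu> (plug C' (ren g Q))"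
      unfolding D1_def by blast
    have gp: "goodP nov (ren g P)" using goodP_ren wtr_vis.prems(2) by blast
    from wtr_vis.IH[OF h(2) gp] obtain t' where t': "wtr (ren g P) t'"
      "\<forall>Q. goodP nov Q \<longrightarrow> wtr Q t' \<longrightarrow> wtr (plug C' Q) s" by blast
    from wtr_ren_refl[OF t'(1) refl h(1) wtr_vis.prems(2)] obtain t0 where
      t0: "wtr P t0" "t' = rtr g t0" by blast
    show ?case
    proof (intro exI conjI allI impI)
      show "wtr P t0" by fact
      fix Q :: "'a pr" assume q: "goodP nov Q" "wtr Q t0"
      have "wtr (ren g Q) t'" using wtr_ren[OF q(2) q(1)] t0 by simp
      then have "wtr (plug C' (ren g Q)) s" using t'(2) goodP_ren q(1) by blast
      then show "wtr (plug C Q) (\<mu> # s)" using h(3) wtr.wtr_vis wtr_vis.hyps(2) by blast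
    qed
  next
    assume "D2 C P \<mu> X"
    then obtain \<nu> P' C' g where h: "inj g" "step P \<nu> P'" "X = plug C' (ren g P')"
        "\<forall>Q Q'. step Q \<nu> Q' \<longrightarrow> step (plug C Q) \<mu> (plug C' (ren g Q'))"
        "\<nu> = Tau \<longrightarrow> \<mu> = Tau \<and> C' = C \<and> g = id"
      unfolding D2_def by blast
    have gP': "goodP nov P'" using step_good h(2) wtr_vis.prems(2) by blast
    have nt: "\<nu> \<noteq> Tau" using h(5) wtr_vis.hyps(2) by blast
    have gp: "goodP nov (ren g P')" using goodP_ren gP' by blast
    from wtr_vis.IH[OF h(3) gp] obtain t' where t': "wtr (ren g P') t'"
      "\<forall>Q. goodP nov Q \<longrightarrow> wtr Q t' \<longrightarrow> wtr (plug C' Q) s" by blast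
    from wtr_ren_refl[OF t'(1) refl h(1) gP'] obtain t0 where
      t0: "wtr P' t0" "t' = rtr g t0" by blast
    show ?case
    proof (intro exI conjI allI impI)
      show "wtr P (\<nu> # t0)" using h(2) nt t0(1) wtr.wtr_vis by blast
      fix Q :: "'a pr" assume q: "goodP nov Q" "wtr Q (\<nu> # t0)"
      from wtr_vis_inv[OF q(2) refl] obtain Q1 Q2 where
        qq: "tstar Q Q1" "step Q1 \<nu> Q2" "wtr Q2 t0" by blast
      have gQ2: "goodP nov Q2" using qq tstar_good step_good q(1) by blast
      have "wtr (ren g Q2) t'" using wtr_ren[OF qq(3) gQ2] t0 by simp
      then have "wtr (plug C' (ren g Q2)) s" using t'(2) goodP_ren gQ2 by blast
      then have "wtr (plug C Q1) (\<mu> # s)" using h(4) qq(2) wtr.wtr_vis wtr_vis.hyps(2) by blast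
      then show "wtr (plug C Q) (\<mu> # s)" using wtr_tstar plug_tstar qq(1) by blast
    qed
  qed
qed

lemma tr_le_plug: "goodP nov P \<Longrightarrow> goodP nov Q \<Longrightarrow> tr_le P Q \<Longrightarrow> tr_le (plug C P) (plug C Q)"
  unfolding tr_le_def using proj by blast

lemma tr_le_refl: "tr_le P P" by (simp add: tr_le_def)

lemma tr_le_trans: "tr_le P Q \<Longrightarrow> tr_le Q R \<Longrightarrow> tr_le P R" by (simp add: tr_le_def)

lemma tr_le_par: "goodP nov A \<Longrightarrow> goodP nov A' \<Longrightarrow> goodP nov B \<Longrightarrow> goodP nov B' \<Longrightarrow>
  tr_le A A' \<Longrightarrow> tr_le B B' \<Longrightarrow> tr_le (PPar A B) (PPar A' B')"
  using tr_le_plug[of A A' "CParL CHole B"] tr_le_plug[of B B' "CParR A' CHole"]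
  by (auto intro: tr_le_trans)

lemma tr_le_res: "goodP nov A \<Longrightarrow> goodP nov A' \<Longrightarrow> tr_le A A' \<Longrightarrow> tr_le (PRes A) (PRes A')"
  using tr_le_plug[of A A' "CRes CHole"] by auto

lemma wt_good: "wt ob vs \<Gamma> P \<Longrightarrow> goodP (\<lambda>j. map_option length (vs j)) P \<and> fvb (length \<Gamma>) P"
proof (induction rule: wt.induct)
  case (wt_var xs \<Gamma> vs i)
  then show ?case by (auto intro!: goodP.intros)
next
  case (wt_sol E xs \<Gamma> i vs)
  then show ?case by (auto intro!: goodP.intros simp: comp_def) (metis length_map)
qed (auto intro: goodP.intros)

definition ext :: "nat list \<Rightarrow> nat \<Rightarrow> nat" where
  "ext xs = (\<lambda>n. if n < length xs then xs ! n else Suc (Max (insert 0 (set xs))) + n)"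

lemma ext_nth: "n < length xs \<Longrightarrow> ext xs n = xs ! n"
  by (simp add: ext_def)

lemma inj_ext: "distinct xs \<Longrightarrow> inj (ext xs)"
proof (rule injI)
  fix x y assume d: "distinct xs" and e: "ext xs x = ext xs y"
  have M: "\<And>n. n < length xs \<Longrightarrow> xs ! n \<le> Max (insert 0 (set xs))"
    by (simp add: nth_mem)
  show "x = y"
  proof (cases "x < length xs"; cases "y < length xs")
    assume "x < length xs" "y < length xs"
    then show ?thesis using e d by (simp add: ext_def nth_eq_iff_index_eq)
  next
    assume a: "x < length xs" "\<not> y < length xs"
    then have "xs ! x = Suc (Max (insert 0 (set xs)) + y)" using e by (simp add: ext_def)
    with M[OF a(1)] show ?thesis by linarith
  next
    assume a: "\<not> x < length xs" "y < length xs"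
    then have "xs ! y = Suc (Max (insert 0 (set xs)) + x)" using e by (simp add: ext_def)
    with M[OF a(2)] show ?thesis by linarith
  next
    assume "\<not> x < length xs" "\<not> y < length xs"
    then show ?thesis using e by (simp add: ext_def)
  qed
qed

lemma ren_nth_ext: "fvb (length xs) P \<Longrightarrow> ren (\<lambda>n. xs ! n) P = ren (ext xs) P"
  by (rule ren_cong) (auto simp: ext_nth)

lemma guarded_ren: "guarded P \<Longrightarrow> guarded (ren f P)"
  by (induction P arbitrary: f) auto

inductive_cases step_inE: "step (PIn a k P) \<mu> X"
inductive_cases step_outE: "step (POut a k P) \<mu> X"
inductive_cases step_repE: "step (PRep a k P) \<mu> X"
inductive_cases step_nilE: "step PNil \<mu> X"
inductive_cases step_varE: "step (PVar i xs) \<mu> X"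
inductive_cases step_solE: "step (PSol E i xs) \<mu> X"

inductive ueq :: "'s pr \<Rightarrow> 's pr \<Rightarrow> bool" where
  e_refl: "ueq A A"
| e_solL: "goodP nov (PSol E i xs) \<Longrightarrow> ueq (unfold_sol E i xs) B \<Longrightarrow> ueq (PSol E i xs) B"
| e_solR: "goodP nov (PSol E i xs) \<Longrightarrow> ueq A (unfold_sol E i xs) \<Longrightarrow> ueq A (PSol E i xs)"
| e_in: "ueq A B \<Longrightarrow> ueq (PIn a k A) (PIn a k B)"
| e_out: "ueq A B \<Longrightarrow> ueq (POut a k A) (POut a k B)"
| e_rep: "ueq A B \<Longrightarrow> ueq (PRep a k A) (PRep a k B)"
| e_res: "ueq A B \<Longrightarrow> ueq (PRes A) (PRes B)"
| e_par: "ueq A1 B1 \<Longrightarrow> ueq A2 B2 \<Longrightarrow> ueq (PPar A1 A2) (PPar B1 B2)"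

lemma ueq_sym: "ueq A B \<Longrightarrow> ueq B A"
  by (induction rule: ueq.induct) (auto intro: ueq.intros)

lemma ueq_ren: "ueq A B \<Longrightarrow> ueq (ren f A) (ren f B)"
proof (induction A B arbitrary: f rule: ueq.induct)
  case (e_solL E i xs B)
  have g: "goodP nov (PSol E i (map f xs))" using e_solL.hyps(1) by (auto elim!: goodP_inv intro!: goodP.intros)
  have "ren f (unfold_sol E i xs) = unfold_sol E i (map f xs)" using unfold_ren e_solL.hyps(1) by blast
  then show ?case using e_solL.IH[of f] g by (auto intro: ueq.e_solL)
next
  case (e_solR E i xs A)
  have g: "goodP nov (PSol E i (map f xs))" using e_solR.hyps(1) by (auto elim!: goodP_inv intro!: goodP.intros)
  have "ren f (unfold_sol E i xs) = unfold_sol E i (map f xs)" using unfold_ren e_solR.hyps(1) by blast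
  then show ?case using e_solR.IH[of f] g by (auto intro: ueq.e_solR)
qed (auto intro: ueq.intros)

lemma ueq_resn: "ueq A B \<Longrightarrow> ueq (resn k A) (resn k B)"
  by (induction k) (auto intro: ueq.intros)

lemma ueq_sim: "ueq A B \<Longrightarrow> step A \<mu> A' \<Longrightarrow> \<exists>B'. step B \<mu> B' \<and> ueq A' B'"
proof (induction A B arbitrary: \<mu> A' rule: ueq.induct)
  case (e_refl A)
  then show ?case by (auto intro: ueq.e_refl)
next
  case (e_solL E i xs B)
  then show ?case by (auto elim: step_solE)
next
  case (e_solR E i xs A)
  then obtain B' where "step (unfold_sol E i xs) \<mu> B'" "ueq A' B'" by blast
  then show ?case using step.s_sol by blast
next
  case (e_in A B a k)
  from e_in.prems have "A' = A" "\<mu> = InA a k" by (auto elim: step_inE)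
  then show ?case using e_in.hyps step.s_in by blast
next
  case (e_out A B a k)
  from e_out.prems have "A' = A" "\<mu> = OutA a k" by (auto elim: step_outE)
  then show ?case using e_out.hyps step.s_out by blast
next
  case (e_rep A B a k)
  from e_rep.prems have "A' = PPar A (ren (\<lambda>i. i + k) (PRep a k A))" "\<mu> = InA a k" by (auto elim: step_repE)
  moreover have "ueq (PPar A (ren (\<lambda>i. i + k) (PRep a k A))) (PPar B (ren (\<lambda>i. i + k) (PRep a k B)))"
    using e_rep by (auto intro!: ueq.intros ueq_ren)
  ultimately show ?case using step.s_rep by blast
next
  case (e_res A B)
  from step_resD[OF e_res.prems] show ?case
  proof (elim disjE exE conjE)
    fix P' assume "\<mu> = Tau" "step A Tau P'" "A' = PRes P'"
    then show ?case using e_res.IH step.s_res_tau ueq.e_res by metis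
  next
    fix a k P' assume h: "\<mu> = InA a k" "step A (InA (Suc a) k) P'" "A' = PRes (ren (swp k) P')"
    then obtain B' where "step B (InA (Suc a) k) B'" "ueq P' B'" using e_res.IH by blast
    then show ?case using h step.s_res_in ueq.e_res ueq_ren by metis
  next
    fix a k P' assume h: "\<mu> = OutA a k" "step A (OutA (Suc a) k) P'" "A' = PRes (ren (swp k) P')"
    then obtain B' where "step B (OutA (Suc a) k) B'" "ueq P' B'" using e_res.IH by blast
    then show ?case using h step.s_res_out ueq.e_res ueq_ren by metis
  qed
next
  case (e_par A1 B1 A2 B2)
  from step_parD[OF e_par.prems] show ?case
  proof (elim disjE exE conjE)
    fix P' assume h: "step A1 \<mu> P'" "A' = PPar P' (ren (\<lambda>i. i + ar \<mu>) A2)"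
    then obtain B' where "step B1 \<mu> B'" "ueq P' B'" using e_par.IH by blast
    then show ?case using h e_par.hyps step.s_parl ueq.e_par ueq_ren by metis
  next
    fix P' assume h: "step A2 \<mu> P'" "A' = PPar (ren (\<lambda>i. i + ar \<mu>) A1) P'"
    then obtain B' where "step B2 \<mu> B'" "ueq P' B'" using e_par.IH by blast
    then show ?case using h e_par.hyps step.s_parr ueq.e_par ueq_ren by metis
  next
    fix a k P' Q' assume h: "\<mu> = Tau" "step A1 (InA a k) P'" "step A2 (OutA a k) Q'" "A' = resn k (PPar P' Q')"
    then obtain B1' B2' where "step B1 (InA a k) B1'" "ueq P' B1'" "step B2 (OutA a k) B2'" "ueq Q' B2'"
      using e_par.IH by blast
    then show ?case using h step.s_comm1 ueq.e_par ueq_resn by metis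
  next
    fix a k P' Q' assume h: "\<mu> = Tau" "step A1 (OutA a k) P'" "step A2 (InA a k) Q'" "A' = resn k (PPar P' Q')"
    then obtain B1' B2' where "step B1 (OutA a k) B1'" "ueq P' B1'" "step B2 (InA a k) B2'" "ueq Q' B2'"
      using e_par.IH by blast
    then show ?case using h step.s_comm2 ueq.e_par ueq_resn by metis
  qed
qed

lemma ueqs_sim: "ueq\<^sup>*\<^sup>* A B \<Longrightarrow> step A \<mu> A' \<Longrightarrow> \<exists>B'. step B \<mu> B' \<and> ueq\<^sup>*\<^sup>* A' B'"
proof (induction arbitrary: A' rule: rtranclp_induct)
  case base
  then show ?case by blast
next
  case (step y z)
  then obtain B' where "step y \<mu> B'" "ueq\<^sup>*\<^sup>* A' B'" by blast
  moreover from ueq_sim[OF step.hyps(2) this(1)] obtain C' where "step z \<mu> C'" "ueq B' C'" by blast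
  ultimately show ?case by (meson rtranclp.rtrancl_into_rtrancl)
qed

lemma step_lift: "step U \<mu> U' \<Longrightarrow> goodP vs U \<Longrightarrow> Hok vs H \<Longrightarrow> step (substV H U) \<mu> (substV H U')"
proof (induction U \<mu> U' rule: step.induct)
  case (s_in a k P)
  then show ?case by (simp add: step.s_in)
next
  case (s_out a k P)
  then show ?case by (simp add: step.s_out)
next
  case (s_rep a k P)
  have "ren (\<lambda>i. i + k) (substV H (PRep a k P)) = substV H (ren (\<lambda>i. i + k) (PRep a k P))"
    using substV_ren s_rep by blast
  then show ?case using step.s_rep[of a k "substV H P"] by simp
next
  case (s_parl P \<mu> P' Q)
  have g: "goodP vs P" "goodP vs Q" using s_parl.prems by (auto elim: goodP_inv)
  have e: "ren (\<lambda>i. i + ar \<mu>) (substV H Q) = substV H (ren (\<lambda>i. i + ar \<mu>) Q)"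
    using substV_ren g s_parl.prems by blast
  have "step (substV H P) \<mu> (substV H P')" using s_parl.IH g s_parl.prems by blast
  from step.s_parl[OF this, of "substV H Q"] show ?case by (simp add: e[symmetric])
next
  case (s_parr Q \<mu> Q' P)
  have g: "goodP vs P" "goodP vs Q" using s_parr.prems by (auto elim: goodP_inv)
  have e: "ren (\<lambda>i. i + ar \<mu>) (substV H P) = substV H (ren (\<lambda>i. i + ar \<mu>) P)"
    using substV_ren g s_parr.prems by blast
  have "step (substV H Q) \<mu> (substV H Q')" using s_parr.IH g s_parr.prems by blast
  from step.s_parr[OF this, of "substV H P"] show ?case by (simp add: e[symmetric])
next
  case (s_comm1 P a k P' Q Q')
  then show ?case using step.s_comm1 by (fastforce elim: goodP_inv simp: substV_resn)
next
  case (s_comm2 P a k P' Q Q')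
  then show ?case using step.s_comm2 by (fastforce elim: goodP_inv simp: substV_resn)
next
  case (s_res_tau P P')
  then show ?case using step.s_res_tau by (fastforce elim: goodP_inv)
next
  case (s_res_in P a k P')
  then have g: "goodP vs P" "goodP vs P'" using step_good by (blast elim: goodP_inv)+
  then have "ren (swp k) (substV H P') = substV H (ren (swp k) P')"
    using substV_ren s_res_in by blast
  then show ?case using s_res_in g step.s_res_in by fastforce
next
  case (s_res_out P a k P')
  then have g: "goodP vs P" "goodP vs P'" using step_good by (blast elim: goodP_inv)+
  then have "ren (swp k) (substV H P') = substV H (ren (swp k) P')"
    using substV_ren s_res_out by blast
  then show ?case using s_res_out g step.s_res_out by fastforce
next
  case (s_sol E i xs \<mu> P')
  have "goodP nov (unfold_sol E i xs)" using unfold_good s_sol by blast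
  then have "goodP nov P'" using step_good s_sol by blast
  then have "substV H P' = P'" by (rule substV_nov)
  then show ?case using s_sol.hyps step.s_sol by simp
qed

lemma step_refl_guarded: "guarded U \<Longrightarrow> goodP vs U \<Longrightarrow> Hok vs H \<Longrightarrow> step (substV H U) \<mu> X \<Longrightarrow>
   \<exists>U'. step U \<mu> U' \<and> X = substV H U'"
proof (induction U arbitrary: \<mu> X)
  case PNil
  then show ?case by (auto elim: step_nilE)
next
  case (PIn a k P)
  then have "X = substV H P" "\<mu> = InA a k" by (auto elim: step_inE)
  then show ?case using step.s_in by blast
next
  case (POut a k P)
  then have "X = substV H P" "\<mu> = OutA a k" by (auto elim: step_outE)
  then show ?case using step.s_out by blast
next
  case (PRep a k P)
  then have X: "X = PPar (substV H P) (ren (\<lambda>i. i + k) (PRep a k (substV H P)))" "\<mu> = InA a k"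
    by (auto elim: step_repE)
  have "ren (\<lambda>i. i + k) (substV H (PRep a k P)) = substV H (ren (\<lambda>i. i + k) (PRep a k P))"
    using substV_ren PRep by blast
  then show ?case using X step.s_rep by fastforce
next
  case (PRes P)
  have g: "goodP vs P" "guarded P" using PRes by (auto elim: goodP_inv)
  from step_resD[OF PRes.prems(4)[simplified]] show ?case
  proof (elim disjE exE conjE)
    fix P' assume "\<mu> = Tau" "step (substV H P) Tau P'" "X = PRes P'"
    then show ?case using PRes.IH[OF g(2) g(1) PRes.prems(3)] step.s_res_tau by fastforce
  next
    fix a k P' assume h: "\<mu> = InA a k" "step (substV H P) (InA (Suc a) k) P'" "X = PRes (ren (swp k) P')"
    from PRes.IH[OF g(2) g(1) PRes.prems(3) h(2)] obtain U' where u: "step P (InA (Suc a) k) U'" "P' = substV H U'"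
      by blast
    have "goodP vs U'" using u step_good g by blast
    then have "ren (swp k) (substV H U') = substV H (ren (swp k) U')" using substV_ren PRes by blast
    then show ?case using h u step.s_res_in by fastforce
  next
    fix a k P' assume h: "\<mu> = OutA a k" "step (substV H P) (OutA (Suc a) k) P'" "X = PRes (ren (swp k) P')"
    from PRes.IH[OF g(2) g(1) PRes.prems(3) h(2)] obtain U' where u: "step P (OutA (Suc a) k) U'" "P' = substV H U'"
      by blast
    have "goodP vs U'" using u step_good g by blast
    then have "ren (swp k) (substV H U') = substV H (ren (swp k) U')" using substV_ren PRes by blast
    then show ?case using h u step.s_res_out by fastforce
  qed
next
  case (PPar P Q)
  have g: "goodP vs P" "guarded P" "goodP vs Q" "guarded Q" using PPar by (auto elim: goodP_inv)
  note IH1 = PPar.IH(1)[OF g(2) g(1) PPar.prems(3)]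
  note IH2 = PPar.IH(2)[OF g(4) g(3) PPar.prems(3)]
  from step_parD[OF PPar.prems(4)[simplified]] show ?case
  proof (elim disjE exE conjE)
    fix P' assume h: "step (substV H P) \<mu> P'" "X = PPar P' (ren (\<lambda>i. i + ar \<mu>) (substV H Q))"
    from IH1[OF h(1)] obtain U' where u: "step P \<mu> U'" "P' = substV H U'" by blast
    have "ren (\<lambda>i. i + ar \<mu>) (substV H Q) = substV H (ren (\<lambda>i. i + ar \<mu>) Q)" using substV_ren g PPar by blast
    then show ?case using h u step.s_parl by fastforce
  next
    fix Q' assume h: "step (substV H Q) \<mu> Q'" "X = PPar (ren (\<lambda>i. i + ar \<mu>) (substV H P)) Q'"
    from IH2[OF h(1)] obtain U' where u: "step Q \<mu> U'" "Q' = substV H U'" by blast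
    have "ren (\<lambda>i. i + ar \<mu>) (substV H P) = substV H (ren (\<lambda>i. i + ar \<mu>) P)" using substV_ren g PPar by blast
    then show ?case using h u step.s_parr by fastforce
  next
    fix a k P' Q' assume h: "\<mu> = Tau" "step (substV H P) (InA a k) P'" "step (substV H Q) (OutA a k) Q'"
      "X = resn k (PPar P' Q')"
    from IH1[OF h(2)] IH2[OF h(3)] obtain U1 U2 where u: "step P (InA a k) U1" "P' = substV H U1"
      "step Q (OutA a k) U2" "Q' = substV H U2" by blast
    then show ?case using h step.s_comm1 by (fastforce simp: substV_resn)
  next
    fix a k P' Q' assume h: "\<mu> = Tau" "step (substV H P) (OutA a k) P'" "step (substV H Q) (InA a k) Q'"
      "X = resn k (PPar P' Q')"
    from IH1[OF h(2)] IH2[OF h(3)] obtain U1 U2 where u: "step P (OutA a k) U1" "P' = substV H U1"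
      "step Q (InA a k) U2" "Q' = substV H U2" by blast
    then show ?case using h step.s_comm2 by (fastforce simp: substV_resn)
  qed
next
  case (PVar i xs)
  then show ?case by simp
next
  case (PSol E i xs)
  have "goodP nov (unfold_sol E i xs)" using unfold_good PSol by blast
  moreover have "step (unfold_sol E i xs) \<mu> X" using PSol.prems(4) by (auto elim: step_solE)
  ultimately have "goodP nov X" using step_good by blast
  then have "substV H X = X" by (rule substV_nov)
  then show ?case using PSol.prems(4) by auto
qed

definition vsI :: "nat set \<Rightarrow> (nat \<Rightarrow> 's abs) \<Rightarrow> nat \<Rightarrow> nat option" where
  "vsI I E j = map_option length (vsys I E j)"

primrec uexp :: "(nat \<Rightarrow> 's abs) \<Rightarrow> 's pr \<Rightarrow> 's pr" where
  "uexp E PNil = PNil"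
| "uexp E (PIn a k P) = PIn a k P"
| "uexp E (POut a k P) = POut a k P"
| "uexp E (PRep a k P) = PRep a k P"
| "uexp E (PRes P) = PRes (uexp E P)"
| "uexp E (PPar P Q) = PPar (uexp E P) (uexp E Q)"
| "uexp E (PVar j xs) = ren (ext xs) (snd (E j))"
| "uexp E (PSol E' i xs) = PSol E' i xs"

definition Rd :: "('s pr \<times> act list) \<Rightarrow> ('s pr \<times> act list) \<Rightarrow> bool" where
  "Rd y x = ((step (fst x) Tau (fst y) \<and> snd y = snd x)
             \<or> (\<exists>\<mu>. \<mu> \<noteq> Tau \<and> step (fst x) \<mu> (fst y) \<and> snd x = \<mu> # snd y))"

inductive accq :: "('a \<Rightarrow> 'a \<Rightarrow> bool) \<Rightarrow> 'a \<Rightarrow> bool" for r where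
  accqI: "(\<And>y. r y x \<Longrightarrow> accq r y) \<Longrightarrow> accq r x"

lemma not_acc_step: "\<not> accq r x \<Longrightarrow> \<exists>y. r y x \<and> \<not> accq r y"
  by (meson accqI)

lemma nodiv_acc:
  assumes nd: "\<not> diverges P"
  shows "accq Rd (P, s)"
proof (rule ccontr)
  assume na: "\<not> accq Rd (P, s)"
  define nx :: "'a pr \<times> act list \<Rightarrow> 'a pr \<times> act list" where "nx = (\<lambda>x. SOME y. Rd y x \<and> \<not> accq Rd y)"
  define f where "f n = (nx ^^ n) (P, s)" for n
  have f0: "f 0 = (P, s)" by (simp add: f_def)
  have fS: "f (Suc n) = nx (f n)" for n by (simp add: f_def)
  have nacc: "\<not> accq Rd (f n)" for n
  proof (induction n)
    case 0 then show ?case using na f0 by simp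
  next
    case (Suc n)
    from not_acc_step[OF Suc] have "\<exists>y. Rd y (f n) \<and> \<not> accq Rd y" .
    then show ?case unfolding fS nx_def by (rule someI2_ex) blast
  qed
  have R: "Rd (f (Suc n)) (f n)" for n
  proof -
    from not_acc_step[OF nacc[of n]] have "\<exists>y. Rd y (f n) \<and> \<not> accq Rd y" .
    then show ?thesis unfolding fS nx_def by (rule someI2_ex) blast
  qed
  define l where "l n = (SOME \<mu>. step (fst (f n)) \<mu> (fst (f (Suc n))) \<and>
       ((\<mu> = Tau \<and> snd (f (Suc n)) = snd (f n)) \<or> (\<mu> \<noteq> Tau \<and> snd (f n) = \<mu> # snd (f (Suc n)))))" for n
  have L: "step (fst (f n)) (l n) (fst (f (Suc n))) \<and>
       ((l n = Tau \<and> snd (f (Suc n)) = snd (f n)) \<or> (l n \<noteq> Tau \<and> snd (f n) = l n # snd (f (Suc n))))" for n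
  proof -
    have "\<exists>\<mu>. step (fst (f n)) \<mu> (fst (f (Suc n))) \<and>
       ((\<mu> = Tau \<and> snd (f (Suc n)) = snd (f n)) \<or> (\<mu> \<noteq> Tau \<and> snd (f n) = \<mu> # snd (f (Suc n))))"
      using R[of n] unfolding Rd_def by blast
    then show ?thesis unfolding l_def by (rule someI_ex)
  qed
  define m where "m n = length (snd (f n))" for n
  have dec: "m (Suc n) \<le> m n" for n using L[of n] unfolding m_def by auto
  have sdec: "l n \<noteq> Tau \<Longrightarrow> m (Suc n) < m n" for n using L[of n] unfolding m_def by auto
  obtain N where minN: "\<forall>n. m N \<le> m n"
    using ex_has_least_nat[of "\<lambda>_. True" 0 m] by blast
  have "\<forall>n\<ge>N. l n = Tau"
  proof (intro allI impI, rule ccontr)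
    fix n assume "N \<le> n" "l n \<noteq> Tau"
    then have "m (Suc n) < m N" using sdec lift_Suc_antimono_le[of m N n] dec by fastforce
    then show False using minN by (meson not_le)
  qed
  then have "diverges P"
    unfolding diverges_def
    by (intro exI[of _ "\<lambda>n. fst (f n)"] exI[of _ l]) (use L f0 in auto)
  then show False using nd by blast
qed

locale sysl =
  fixes I :: "nat set" and E :: "nat \<Rightarrow> 's abs"
  assumes sg: "\<forall>i\<in>I. goodP (vsI I E) (snd (E i)) \<and> fvb (length (fst (E i))) (snd (E i)) \<and> guarded (snd (E i))"
begin

lemma vs_Some: "vsI I E j = Some m \<longleftrightarrow> j \<in> I \<and> m = length (fst (E j))"
  by (auto simp: vsI_def vsys_def)

lemma fam_good: "\<forall>j. goodP (\<lambda>j. Some (length (fst (sysfun I E j)))) (snd (sysfun I E j))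
   \<and> fvb (length (fst (sysfun I E j))) (snd (sysfun I E j))"
proof
  fix j
  show "goodP (\<lambda>j. Some (length (fst (sysfun I E j)))) (snd (sysfun I E j))
   \<and> fvb (length (fst (sysfun I E j))) (snd (sysfun I E j))"
  proof (cases "j \<in> I")
    case True
    then have g1: "goodP (vsI I E) (snd (E j))" and f1: "fvb (length (fst (E j))) (snd (E j))" using sg by auto
    have m: "\<forall>i m. vsI I E i = Some m \<longrightarrow> Some (length (fst (sysfun I E i))) = Some m"
      by (auto simp: vs_Some sysfun_def)
    have "goodP (\<lambda>j. Some (length (fst (sysfun I E j)))) (snd (E j))"
      by (rule goodP_mono[OF g1 m])
    note this f1
    moreover have "sysfun I E j = E j" using True by (simp add: sysfun_def)
    ultimately show ?thesis by simp
  next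
    case False
    then show ?thesis by (simp add: sysfun_def g_nil)
  qed
qed

lemma K_good: "length xs = length (fst (sysfun I E j)) \<Longrightarrow> goodP nov (PSol (sysfun I E) j xs)"
  using fam_good by (auto intro!: goodP.intros)

lemma K_ok: "Hok (vsI I E) (synsol I E)"
  unfolding Hok_def
proof (intro allI impI conjI)
  fix j m assume "vsI I E j = Some m"
  then have j: "j \<in> I" "m = length (fst (E j))" by (auto simp: vs_Some)
  show "goodP nov (snd (synsol I E j))"
    using K_good j by (simp add: synsol_def sysfun_def)
  show "fvb m (snd (synsol I E j))" using j by (simp add: synsol_def)
qed

lemma K_var: "j \<in> I \<Longrightarrow> length xs = length (fst (E j)) \<Longrightarrow> substV (synsol I E) (PVar j xs) = PSol (sysfun I E) j xs"
proof -
  assume "j \<in> I" and l: "length xs = length (fst (E j))"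
  have "map ((!) xs) [0..<length (fst (E j))] = xs" using map_nth[of xs] l by simp
  then show ?thesis by (simp add: synsol_def)
qed

lemma unfold_K: "j \<in> I \<Longrightarrow> length xs = length (fst (E j)) \<Longrightarrow>
   unfold_sol (sysfun I E) j xs = ren (ext xs) (substV (synsol I E) (snd (E j)))"
proof -
  assume j: "j \<in> I" and l: "length xs = length (fst (E j))"
  have gE: "goodP (vsI I E) (snd (E j))" "fvb (length (fst (E j))) (snd (E j))" using sg j by auto
  have "substV (solH (sysfun I E)) (snd (E j)) = substV (synsol I E) (snd (E j))"
    by (rule substV_cong[OF gE(1)]) (auto simp: vs_Some solH_def synsol_def sysfun_def)
  moreover have "fvb (length xs) (substV (synsol I E) (snd (E j)))"
    using substV_fvb[OF gE(1) K_ok] gE(2) l by simp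
  ultimately show ?thesis
    using j by (simp add: unfold_sol_def' sysfun_def ren_nth_ext)
qed

lemma uexp_good: "goodP (vsI I E) T \<Longrightarrow> goodP (vsI I E) (uexp E T) \<and> guarded (uexp E T)"
proof (induction "vsI I E" T rule: goodP.induct)
  case (g_var i xs)
  then have "i \<in> I" by (simp add: vs_Some)
  then show ?case using sg g_var goodP_ren inj_ext guarded_ren by fastforce
qed (auto intro: goodP.intros)

lemma ueq_uexp: "goodP (vsI I E) T \<Longrightarrow> ueq (substV (synsol I E) T) (substV (synsol I E) (uexp E T))"
proof (induction "vsI I E" T rule: goodP.induct)
  case (g_var i xs)
  then have i: "i \<in> I" "length xs = length (fst (E i))" by (auto simp: vs_Some)
  have gE: "goodP (vsI I E) (snd (E i))" using sg i by auto
  have "substV (synsol I E) (ren (ext xs) (snd (E i))) = ren (ext xs) (substV (synsol I E) (snd (E i)))"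
    using substV_ren[OF gE K_ok] by simp
  also have "\<dots> = unfold_sol (sysfun I E) i xs" using unfold_K i by simp
  finally have e: "substV (synsol I E) (uexp E (PVar i xs)) = unfold_sol (sysfun I E) i xs" by simp
  have "goodP nov (PSol (sysfun I E) i xs)" using K_good i by (simp add: sysfun_def)
  then show ?case unfolding e K_var[OF i] by (rule e_solL) (rule e_refl)
qed (auto intro: ueq.intros)

lemma exA: "goodP (vsI I E) T \<Longrightarrow> Hok (vsI I E) G \<Longrightarrow> (\<forall>j\<in>I. tr_le (substV G (snd (E j))) (snd (G j))) \<Longrightarrow> tr_le (substV G (uexp E T)) (substV G T)"
proof (induction "vsI I E" T rule: goodP.induct)
  case (g_var i xs)
  then have i: "i \<in> I" "length xs = length (fst (E i))" by (auto simp: vs_Some)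
  have gE: "goodP (vsI I E) (snd (E i))" using sg i by auto
  have hG: "goodP nov (snd (G i))" "fvb (length xs) (snd (G i))" using g_var.prems(1) i
    unfolding Hok_def by (auto simp: vs_Some)
  have e1: "substV G (uexp E (PVar i xs)) = ren (ext xs) (substV G (snd (E i)))"
    using substV_ren[OF gE g_var.prems(1)] by simp
  have e2: "substV G (PVar i xs) = ren (ext xs) (snd (G i))"
    using ren_nth_ext[OF hG(2)] by simp
  show ?case unfolding e1 e2
    by (rule tr_le_ren[OF inj_ext[OF g_var.hyps(2)] substV_good[OF gE g_var.prems(1)] hG(1)])
      (use g_var.prems(2) i in blast)
next
  case (g_par P Q)
  have u: "goodP (vsI I E) (uexp E P)" "goodP (vsI I E) (uexp E Q)" using uexp_good g_par by blast+
  show ?case using tr_le_par[OF substV_good[OF u(1) g_par.prems(1)] substV_good[OF g_par.hyps(1) g_par.prems(1)]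
      substV_good[OF u(2) g_par.prems(1)] substV_good[OF g_par.hyps(3) g_par.prems(1)]] g_par by simp
next
  case (g_res P)
  have u: "goodP (vsI I E) (uexp E P)" using uexp_good g_res by blast
  show ?case using tr_le_res[OF substV_good[OF u g_res.prems(1)] substV_good[OF g_res.hyps(1) g_res.prems(1)]] g_res
    by simp
qed (auto simp: tr_le_refl)

lemma exB: "goodP (vsI I E) T \<Longrightarrow> Hok (vsI I E) G \<Longrightarrow> (\<forall>j\<in>I. tr_le (snd (G j)) (substV G (snd (E j)))) \<Longrightarrow> tr_le (substV G T) (substV G (uexp E T))"
proof (induction "vsI I E" T rule: goodP.induct)
  case (g_var i xs)
  then have i: "i \<in> I" "length xs = length (fst (E i))" by (auto simp: vs_Some)
  have gE: "goodP (vsI I E) (snd (E i))" using sg i by auto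
  have hG: "goodP nov (snd (G i))" "fvb (length xs) (snd (G i))" using g_var.prems(1) i
    unfolding Hok_def by (auto simp: vs_Some)
  have e1: "substV G (uexp E (PVar i xs)) = ren (ext xs) (substV G (snd (E i)))"
    using substV_ren[OF gE g_var.prems(1)] by simp
  have e2: "substV G (PVar i xs) = ren (ext xs) (snd (G i))"
    using ren_nth_ext[OF hG(2)] by simp
  show ?case unfolding e1 e2
    by (rule tr_le_ren[OF inj_ext[OF g_var.hyps(2)] hG(1) substV_good[OF gE g_var.prems(1)]])
      (use g_var.prems(2) i in blast)
next
  case (g_par P Q)
  have u: "goodP (vsI I E) (uexp E P)" "goodP (vsI I E) (uexp E Q)" using uexp_good g_par by blast+
  show ?case using tr_le_par[OF substV_good[OF g_par.hyps(1) g_par.prems(1)] substV_good[OF u(1) g_par.prems(1)]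
      substV_good[OF g_par.hyps(3) g_par.prems(1)] substV_good[OF u(2) g_par.prems(1)]] g_par by simp
next
  case (g_res P)
  have u: "goodP (vsI I E) (uexp E P)" using uexp_good g_res by blast
  show ?case using tr_le_res[OF substV_good[OF g_res.hyps(1) g_res.prems(1)] substV_good[OF u g_res.prems(1)]] g_res
    by simp
qed (auto simp: tr_le_refl)

lemma partA:
  assumes hG: "Hok (vsI I E) G" and pre: "\<forall>j\<in>I. tr_le (substV G (snd (E j))) (snd (G j))"
  shows "wtr X s \<Longrightarrow> goodP (vsI I E) T \<Longrightarrow> ueq\<^sup>*\<^sup>* X (substV (synsol I E) T) \<Longrightarrow> wtr (substV G T) s"
proof (induction X s arbitrary: T rule: wtr.induct)
  case (wtr_nil P)
  then show ?case by (simp add: wtr.wtr_nil)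
next
  case (wtr_tau X X' s)
  define U where "U = uexp E T"
  have gU: "goodP (vsI I E) U" "guarded U" using uexp_good wtr_tau.prems(1) U_def by blast+
  have "ueq\<^sup>*\<^sup>* X (substV (synsol I E) U)"
    using wtr_tau.prems(2) ueq_uexp[OF wtr_tau.prems(1)] U_def by (meson rtranclp.rtrancl_into_rtrancl)
  from ueqs_sim[OF this wtr_tau.hyps(1)] obtain Y where Y: "step (substV (synsol I E) U) Tau Y" "ueq\<^sup>*\<^sup>* X' Y"
    by blast
  from step_refl_guarded[OF gU(2) gU(1) K_ok Y(1)] obtain U' where U': "step U Tau U'" "Y = substV (synsol I E) U'"
    by blast
  have gU': "goodP (vsI I E) U'" using step_good U' gU by blast
  have "wtr (substV G U') s" using wtr_tau.IH[OF gU'] Y U' by blast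
  then have "wtr (substV G U) s" using step_lift[OF U'(1) gU(1) hG] wtr.wtr_tau by blast
  then show ?case using exA[OF wtr_tau.prems(1) hG pre] U_def unfolding tr_le_def by blast
next
  case (wtr_vis X \<mu> X' s)
  define U where "U = uexp E T"
  have gU: "goodP (vsI I E) U" "guarded U" using uexp_good wtr_vis.prems(1) U_def by blast+
  have "ueq\<^sup>*\<^sup>* X (substV (synsol I E) U)"
    using wtr_vis.prems(2) ueq_uexp[OF wtr_vis.prems(1)] U_def by (meson rtranclp.rtrancl_into_rtrancl)
  from ueqs_sim[OF this wtr_vis.hyps(1)] obtain Y where Y: "step (substV (synsol I E) U) \<mu> Y" "ueq\<^sup>*\<^sup>* X' Y"
    by blast
  from step_refl_guarded[OF gU(2) gU(1) K_ok Y(1)] obtain U' where U': "step U \<mu> U'" "Y = substV (synsol I E) U'"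
    by blast
  have gU': "goodP (vsI I E) U'" using step_good U' gU by blast
  have "wtr (substV G U') s" using wtr_vis.IH[OF gU'] Y U' by blast
  then have "wtr (substV G U) (\<mu> # s)" using step_lift[OF U'(1) gU(1) hG] wtr.wtr_vis wtr_vis.hyps(2) by blast
  then show ?case using exA[OF wtr_vis.prems(1) hG pre] U_def unfolding tr_le_def by blast
qed

lemma partB:
  assumes hF: "Hok (vsI I E) F" and post: "\<forall>j\<in>I. tr_le (snd (F j)) (substV F (snd (E j)))"
  shows "accq Rd p \<Longrightarrow> \<forall>X s T. p = (X, s) \<longrightarrow> goodP (vsI I E) T \<longrightarrow> ueq\<^sup>*\<^sup>* (substV (synsol I E) T) X
     \<longrightarrow> wtr (substV F T) s \<longrightarrow> wtr X s"
proof (induction p rule: accq.induct)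
  case (accqI p)
  show ?case
  proof (intro allI impI)
    fix X s T assume p: "p = (X, s)" and gT: "goodP (vsI I E) T"
      and eq: "ueq\<^sup>*\<^sup>* (substV (synsol I E) T) X" and w: "wtr (substV F T) s"
    define U where "U = uexp E T"
    have gU: "goodP (vsI I E) U" "guarded U" using uexp_good gT U_def by blast+
    have eqU: "ueq\<^sup>*\<^sup>* (substV (synsol I E) U) X"
      using eq ueq_sym[OF ueq_uexp[OF gT]] U_def by (meson converse_rtranclp_into_rtranclp)
    have wU: "wtr (substV F U) s" using exB[OF gT hF post] w U_def unfolding tr_le_def by blast
    from wU show "wtr X s"
    proof (cases rule: wtr.cases)
      case wtr_nil
      then show ?thesis by (simp add: wtr.wtr_nil)
    next
      case (wtr_tau Y)
      from step_refl_guarded[OF gU(2) gU(1) hF wtr_tau(1)] obtain U' where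
        U': "step U Tau U'" "Y = substV F U'" by blast
      have sK: "step (substV (synsol I E) U) Tau (substV (synsol I E) U')" using step_lift[OF U'(1) gU(1) K_ok] .
      from ueqs_sim[OF eqU sK] obtain X' where X': "step X Tau X'" "ueq\<^sup>*\<^sup>* (substV (synsol I E) U') X'" by blast
      have r: "Rd (X', s) p" using X' p by (simp add: Rd_def)
      have gU': "goodP (vsI I E) U'" using step_good U' gU by blast
      have "wtr X' s" using accqI.IH[OF r] gU' X'(2) wtr_tau(2) U'(2) by blast
      then show ?thesis using X'(1) wtr.wtr_tau by blast
    next
      case (wtr_vis \<mu> Y s')
      from step_refl_guarded[OF gU(2) gU(1) hF wtr_vis(2)] obtain U' where
        U': "step U \<mu> U'" "Y = substV F U'" by blast
      have sK: "step (substV (synsol I E) U) \<mu> (substV (synsol I E) U')" using step_lift[OF U'(1) gU(1) K_ok] .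
      from ueqs_sim[OF eqU sK] obtain X' where X': "step X \<mu> X'" "ueq\<^sup>*\<^sup>* (substV (synsol I E) U') X'" by blast
      have r: "Rd (X', s') p" using X' p wtr_vis by (auto simp: Rd_def)
      have gU': "goodP (vsI I E) U'" using step_good U' gU by blast
      have "wtr X' s'" using accqI.IH[OF r] gU' X'(2) wtr_vis U'(2) by blast
      then show ?thesis using X'(1) wtr.wtr_vis wtr_vis by blast
    qed
  qed
qed

lemma main:
  assumes hF: "Hok (vsI I E) F" and post: "\<forall>j\<in>I. tr_le (snd (F j)) (substV F (snd (E j)))"
    and hG: "Hok (vsI I E) G" and pre: "\<forall>j\<in>I. tr_le (substV G (snd (E j))) (snd (G j))"
    and nd: "\<forall>i\<in>I. \<not> diverges (snd (synsol I E i))"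
    and i: "i \<in> I"
  shows "tr_le (snd (F i)) (snd (G i))"
proof -
  define n where "n = length (fst (E i))"
  define T0 :: "'s pr" where "T0 = PVar i [0..<n]"
  have gT: "goodP (vsI I E) T0" unfolding T0_def using i by (auto intro!: goodP.intros simp: vs_Some n_def)
  have eK: "substV (synsol I E) T0 = snd (synsol I E i)"
    unfolding T0_def using K_var[OF i, of "[0..<n]"] by (simp add: n_def synsol_def)
  have fF: "fvb n (snd (F i))" "fvb n (snd (G i))" using hF hG i unfolding Hok_def by (auto simp: vs_Some n_def)
  have eF: "substV F T0 = snd (F i)" unfolding T0_def using ren_id_fvb[OF fF(1)] by simp
  have eG: "substV G T0 = snd (G i)" unfolding T0_def using ren_id_fvb[OF fF(2)] by simp
  show ?thesis unfolding tr_le_def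
  proof (intro allI impI)
    fix s assume "wtr (snd (F i)) s"
    then have "wtr (substV F T0) s" using eF by simp
    moreover have "accq Rd (snd (synsol I E i), s)" using nodiv_acc nd i by blast
    ultimately have "wtr (snd (synsol I E i)) s"
      using partB[OF hF post] gT eK by (metis rtranclp.rtrancl_refl)
    then have "wtr (substV G T0) s"
      using partA[OF hG pre] gT eK by (metis rtranclp.rtrancl_refl)
    then show "wtr (snd (G i)) s" using eG by simp
  qed
qed

end

lemma vsI_eq: "vsI I E = (\<lambda>j. map_option length (vsys I E j))"
  by (simp add: fun_eq_iff vsI_def)

lemma closed_Hok:
  assumes "\<forall>j\<in>I. closed_abs ob (F j) (fst (E j))"
  shows "Hok (vsI I E) F"
  unfolding Hok_def
proof (intro allI impI)
  fix j m assume "vsI I E j = Some m"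
  then have j: "j \<in> I" "m = length (fst (E j))" by (auto simp: vsI_def vsys_def split: if_splits)
  then have "wt ob (\<lambda>_. None) (fst (E j)) (snd (F j))" using assms by (auto simp: closed_abs_def)
  from wt_good[OF this] show "goodP nov (snd (F j)) \<and> fvb m (snd (F j))" using j by simp
qed

theorem theorem6p7:
  fixes ob :: "'s \<Rightarrow> 's list"
    and I I' :: "nat set"
    and E E' F G :: "nat \<Rightarrow> 's list \<times> 's pr"
  assumes sysE: "sys_ok ob I E"
    and sysE': "sys_ok ob I' E'"
    and ext: "extends_sys ob I E I' E'"
    and guard: "guarded_sys I' E'"
    and nodiv: "\<forall>i\<in>I'. \<not> diverges (snd (synsol I' E' i))"
    and postF: "post_fp ob I E F"
    and preG: "pre_fp ob I E G"
  shows "abs_tuple_le I F G"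
proof -
  obtain J where J: "I' - J = I"
    and hpre: "\<forall>F. pre_fp ob I E F \<longrightarrow> (\<exists>F'. pre_fp ob I' E' F' \<and> (\<forall>i\<in>I. F' i = F i))"
    and hpost: "\<forall>F. post_fp ob I E F \<longrightarrow> (\<exists>F'. post_fp ob I' E' F' \<and> (\<forall>i\<in>I. F' i = F i))"
    using ext unfolding extends_sys_def by blast
  obtain F' where F': "post_fp ob I' E' F'" "\<forall>i\<in>I. F' i = F i" using hpost postF by blast
  obtain G' where G': "pre_fp ob I' E' G'" "\<forall>i\<in>I. G' i = G i" using hpre preG by blast
  have sl: "sysl I' E'"
    unfolding sysl_def
  proof
    fix i assume i: "i \<in> I'"
    then have "wt ob (vsys I' E') (fst (E' i)) (snd (E' i))" using sysE' by (simp add: sys_ok_def)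
    from wt_good[OF this] have "goodP (vsI I' E') (snd (E' i)) \<and> fvb (length (fst (E' i))) (snd (E' i))"
      by (simp add: vsI_eq)
    moreover have "guarded (snd (E' i))" using guard i by (simp add: guarded_sys_def)
    ultimately show "goodP (vsI I' E') (snd (E' i)) \<and> fvb (length (fst (E' i))) (snd (E' i)) \<and> guarded (snd (E' i))"
      by blast
  qed
  have hF: "Hok (vsI I' E') F'" using F'(1) closed_Hok unfolding post_fp_def by blast
  have hG: "Hok (vsI I' E') G'" using G'(1) closed_Hok unfolding pre_fp_def by blast
  have post: "\<forall>j\<in>I'. tr_le (snd (F' j)) (substV F' (snd (E' j)))"
    using F'(1) by (auto simp: post_fp_def abs_le_def inst_def)
  have pre: "\<forall>j\<in>I'. tr_le (substV G' (snd (E' j))) (snd (G' j))"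
    using G'(1) by (auto simp: pre_fp_def abs_le_def inst_def)
  show ?thesis
    unfolding abs_tuple_le_def
  proof
    fix i assume i: "i \<in> I"
    then have i': "i \<in> I'" using J by blast
    have "tr_le (snd (F' i)) (snd (G' i))"
      using sysl.main[OF sl hF post hG pre nodiv i'] .
    moreover have "fst (F i) = fst (G i)"
      using postF preG i by (auto simp: post_fp_def pre_fp_def closed_abs_def)
    ultimately show "abs_le (F i) (G i)" using F'(2) G'(2) i by (simp add: abs_le_def)
  qed
qed

end
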